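(* Let $\pi$ be the degree sequence of a tree with boundary, let $\mathcal{T}_\pi$ be the class of trees with boundary with degree sequence $\pi$, and let $G=(V,E)\in\mathcal{T}_\pi$. Then there exists an SLO$^\ast$-tree $G^\ast=(V,E^\ast)\in\mathcal{T}_\pi$ with $\lambda(G^\ast)\le\lambda(G)$.
   Context: A tree with boundary is a finite tree $G=(V,E)$ whose vertex set is partitioned into the set $\partial V$ of boundary vertices, which are exactly the vertices of degree $1$, and the set $V_0$ of interior vertices, which are exactly the vertices of degree at least $2$; both sets are nonempty. Its degree sequence is the multiset of vertex degrees. The Dirichlet operator $\Delta_0$ is the principal submatrix of the Laplacian $D-A$ indexed by $V_0$; $\lambda(G)$ is its smallest eigenvalue. For a chosen root $v_0$, $h(v)=\mathrm{dist}(v,v_0)$; if $v,w$ are adjacent with $h(w)=h(v)+1$, $w$ is a child of $v$. A total order $\prec$ on $V$ is an SLO-ordering for root $v_0$ if: (S1) $v\prec w$ implies $h(v)\le h(w)$; (S2) if $v_1\prec v_2$ then every child of $v_1$ precedes every child of $v_2$; (S3) if $v\prec w$ and $v\in\partial V$ then $w\in\partial V$. It is an SLO$^\ast$-ordering if additionally (S4) for interior vertices $v\prec w$ implies $d_v\le d_w$ ($d_v$ the degree). An SLO$^\ast$-tree is a tree with boundary admitting an SLO$^\ast$-ordering for some root. *)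

theory Defs
  imports Complex_Main "HOL-Library.Multiset"
begin

definition simple_graph :: "'a set \<Rightarrow> 'a set set \<Rightarrow> bool" where
  "simple_graph V E \<longleftrightarrow> finite V \<and>
     (\<forall>e\<in>E. \<exists>v w. e = {v, w} \<and> v \<noteq> w \<and> v \<in> V \<and> w \<in> V)"

definition deg :: "'a set set \<Rightarrow> 'a \<Rightarrow> nat" where
  "deg E v = card {w. {v, w} \<in> E}"

definition is_walk :: "'a set set \<Rightarrow> 'a list \<Rightarrow> bool" where
  "is_walk E ps \<longleftrightarrow> ps \<noteq> [] \<and> (\<forall>i. Suc i < length ps \<longrightarrow> {ps ! i, ps ! Suc i} \<in> E)"

definition connected_graph :: "'a set \<Rightarrow> 'a set set \<Rightarrow> bool" where
  "connected_graph V E \<longleftrightarrow>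
     (\<forall>v\<in>V. \<forall>w\<in>V. \<exists>ps. is_walk E ps \<and> hd ps = v \<and> last ps = w)"

definition is_cycle :: "'a set set \<Rightarrow> 'a list \<Rightarrow> bool" where
  "is_cycle E cs \<longleftrightarrow> length cs \<ge> 3 \<and> distinct cs \<and>
     (\<forall>i < length cs. {cs ! i, cs ! ((i + 1) mod length cs)} \<in> E)"

definition is_tree :: "'a set \<Rightarrow> 'a set set \<Rightarrow> bool" where
  "is_tree V E \<longleftrightarrow> simple_graph V E \<and> V \<noteq> {} \<and> connected_graph V E \<and>
     \<not> (\<exists>cs. set cs \<subseteq> V \<and> is_cycle E cs)"

definition boundary :: "'a set \<Rightarrow> 'a set set \<Rightarrow> 'a set" where
  "boundary V E = {v \<in> V. deg E v = 1}"

definition interior :: "'a set \<Rightarrow> 'a set set \<Rightarrow> 'a set" where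
  "interior V E = {v \<in> V. deg E v \<ge> 2}"

definition tree_with_boundary :: "'a set \<Rightarrow> 'a set set \<Rightarrow> bool" where
  "tree_with_boundary V E \<longleftrightarrow> is_tree V E \<and>
     V = boundary V E \<union> interior V E \<and>
     boundary V E \<noteq> {} \<and> interior V E \<noteq> {}"

definition degree_sequence :: "'a set \<Rightarrow> 'a set set \<Rightarrow> nat multiset" where
  "degree_sequence V E = image_mset (deg E) (mset_set V)"

text \<open>Dirichlet operator: principal submatrix of the Laplacian D - A indexed by
  the interior vertices, acting on functions on the interior.\<close>
definition dirichlet_op :: "'a set \<Rightarrow> 'a set set \<Rightarrow> ('a \<Rightarrow> real) \<Rightarrow> 'a \<Rightarrow> real" where
  "dirichlet_op V E x v =
     real (deg E v) * x v - (\<Sum>w\<in>{w \<in> interior V E. {v, w} \<in> E}. x w)"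

definition dirichlet_eigenvalues :: "'a set \<Rightarrow> 'a set set \<Rightarrow> real set" where
  "dirichlet_eigenvalues V E = {\<mu>. \<exists>x. (\<exists>v\<in>interior V E. x v \<noteq> 0) \<and>
      (\<forall>v\<in>interior V E. dirichlet_op V E x v = \<mu> * x v)}"

definition lambda_min :: "'a set \<Rightarrow> 'a set set \<Rightarrow> real" where
  "lambda_min V E = Min (dirichlet_eigenvalues V E)"

definition gdist :: "'a set set \<Rightarrow> 'a \<Rightarrow> 'a \<Rightarrow> nat" where
  "gdist E v w = (LEAST n. \<exists>ps. is_walk E ps \<and> length ps = Suc n \<and> hd ps = v \<and> last ps = w)"

definition is_child :: "'a set set \<Rightarrow> 'a \<Rightarrow> 'a \<Rightarrow> 'a \<Rightarrow> bool" where
  "is_child E v0 v w \<longleftrightarrow> {v, w} \<in> E \<and> gdist E w v0 = gdist E v v0 + 1"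

text \<open>A total order on V given by a list enumerating V without repetition.\<close>
definition prec :: "'a list \<Rightarrow> 'a \<Rightarrow> 'a \<Rightarrow> bool" where
  "prec xs v w \<longleftrightarrow> (\<exists>i j. i < j \<and> j < length xs \<and> xs ! i = v \<and> xs ! j = w)"

definition SLO_ordering :: "'a set \<Rightarrow> 'a set set \<Rightarrow> 'a \<Rightarrow> 'a list \<Rightarrow> bool" where
  "SLO_ordering V E v0 xs \<longleftrightarrow> distinct xs \<and> set xs = V \<and>
     (\<forall>v w. prec xs v w \<longrightarrow> gdist E v v0 \<le> gdist E w v0) \<and>
     (\<forall>v1 v2 c1 c2. prec xs v1 v2 \<and> is_child E v0 v1 c1 \<and> is_child E v0 v2 c2
        \<longrightarrow> prec xs c1 c2) \<and>
     (\<forall>v w. prec xs v w \<and> v \<in> boundary V E \<longrightarrow> w \<in> boundary V E)"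

definition SLO_star_ordering :: "'a set \<Rightarrow> 'a set set \<Rightarrow> 'a \<Rightarrow> 'a list \<Rightarrow> bool" where
  "SLO_star_ordering V E v0 xs \<longleftrightarrow> SLO_ordering V E v0 xs \<and>
     (\<forall>v w. v \<in> interior V E \<and> w \<in> interior V E \<and> prec xs v w \<longrightarrow> deg E v \<le> deg E w)"

definition SLO_star_tree :: "'a set \<Rightarrow> 'a set set \<Rightarrow> bool" where
  "SLO_star_tree V E \<longleftrightarrow> tree_with_boundary V E \<and>
     (\<exists>v0\<in>V. \<exists>xs. SLO_star_ordering V E v0 xs)"

end

theory Submission
  imports Defs "HOL-Analysis.Analysis"
begin

definition bf :: "'a set \<Rightarrow> 'a set set \<Rightarrow> ('a \<Rightarrow> real) \<Rightarrow> ('a \<Rightarrow> real) \<Rightarrow> real" where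
  "bf V E x y = (\<Sum>v\<in>Defs.interior V E. y v * dirichlet_op V E x v)"

definition ipr :: "'a set \<Rightarrow> 'a set set \<Rightarrow> ('a \<Rightarrow> real) \<Rightarrow> ('a \<Rightarrow> real) \<Rightarrow> real" where
  "ipr V E x y = (\<Sum>v\<in>Defs.interior V E. x v * y v)"

lemma dop_lin: "dirichlet_op V E (\<lambda>w. a * x w + b * y w) v = a * dirichlet_op V E x v + b * dirichlet_op V E y v"
  unfolding dirichlet_op_def by (simp add: sum.distrib sum_distrib_left algebra_simps)

lemma dop_scale: "dirichlet_op V E (\<lambda>w. a * x w) v = a * dirichlet_op V E x v"
  unfolding dirichlet_op_def by (simp add: sum_distrib_left algebra_simps)

lemma bf_sym:
  assumes "finite V"
  shows "bf V E x y = bf V E y x"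
proof -
  let ?I = "Defs.interior V E"
  have fI: "finite ?I" using assms unfolding Defs.interior_def by simp
  have eq: "bf V E x y = (\<Sum>v\<in>?I. y v * real (deg E v) * x v) - (\<Sum>v\<in>?I. \<Sum>w\<in>{w\<in>?I. {v,w}\<in>E}. y v * x w)"
    unfolding bf_def dirichlet_op_def by (simp add: right_diff_distrib sum_subtractf sum_distrib_left algebra_simps)
  have eq2: "bf V E y x = (\<Sum>v\<in>?I. x v * real (deg E v) * y v) - (\<Sum>v\<in>?I. \<Sum>w\<in>{w\<in>?I. {v,w}\<in>E}. x v * y w)"
    unfolding bf_def dirichlet_op_def by (simp add: right_diff_distrib sum_subtractf sum_distrib_left algebra_simps)
  have "(\<Sum>v\<in>?I. \<Sum>w\<in>{w\<in>?I. {v,w}\<in>E}. y v * x w) = (\<Sum>w\<in>?I. \<Sum>v\<in>{v\<in>?I. {v,w}\<in>E}. y v * x w)"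
    by (rule sum.swap_restrict[OF fI fI])
  also have "\<dots> = (\<Sum>v\<in>?I. \<Sum>w\<in>{w\<in>?I. {v,w}\<in>E}. x v * y w)"
    by (simp add: insert_commute mult.commute)
  finally show ?thesis using eq eq2 by (simp add: algebra_simps)
qed

lemma proj_cont: "continuous_on S (\<lambda>x::'a\<Rightarrow>real. x i)"
  by (rule continuous_on_subset[OF continuous_on_product_coordinates]) simp

lemma exists_min:
  fixes I :: "'a set" and F :: "('a \<Rightarrow> real) \<Rightarrow> real"
  assumes fI: "finite I" and ne: "I \<noteq> {}" and cF: "continuous_on UNIV F"
  shows "\<exists>x0. (\<forall>v. v \<notin> I \<longrightarrow> x0 v = 0) \<and> (\<Sum>v\<in>I. (x0 v)^2) = 1 \<and>
     (\<forall>x. (\<forall>v. v \<notin> I \<longrightarrow> x v = 0) \<and> (\<Sum>v\<in>I. (x v)^2) = 1 \<longrightarrow> F x0 \<le> F x)"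
proof -
  define S where "S = (\<lambda>v::'a. if v \<in> I then {-1..1::real} else {0})"
  define B where "B = Pi\<^sub>E UNIV S"
  have cB: "compact B"
  proof -
    have "compactin (product_topology (\<lambda>_. euclidean) UNIV) B"
      unfolding B_def by (subst compactin_PiE) (auto simp: S_def)
    then show ?thesis by (simp add: euclidean_product_topology)
  qed
  define K where "K = B \<inter> {x. (\<Sum>v\<in>I. (x v)^2) = 1}"
  have cl: "closed {x::'a\<Rightarrow>real. (\<Sum>v\<in>I. (x v)^2) = 1}"
    by (intro closed_Collect_eq continuous_intros proj_cont)
  have cK: "compact K" unfolding K_def using cB cl by (rule compact_Int_closed)
  obtain v0 where v0: "v0 \<in> I" using ne by auto
  define e where "e = (\<lambda>v::'a. if v = v0 then 1::real else 0)"
  have e2: "(e v)^2 = e v" for v by (simp add: e_def)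
  have "(\<Sum>v\<in>I. (e v)^2) = 1" unfolding e2 using v0 fI by (simp add: e_def)
  then have "e \<in> K" unfolding K_def B_def S_def using v0
    by (auto simp: PiE_UNIV_domain e_def)
  then have neK: "K \<noteq> {}" by auto
  obtain x0 where x0: "x0 \<in> K" "\<And>y. y \<in> K \<Longrightarrow> F x0 \<le> F y"
    using continuous_attains_inf[OF cK neK continuous_on_subset[OF cF]] by auto
  have memK: "x \<in> K" if "\<forall>v. v \<notin> I \<longrightarrow> x v = 0" "(\<Sum>v\<in>I. (x v)^2) = 1" for x
  proof -
    have "\<bar>x v\<bar> \<le> 1" if "v \<in> I" for v
    proof -
      have "(x v)^2 \<le> (\<Sum>v\<in>I. (x v)^2)"
        by (rule member_le_sum) (use that fI in auto)
      then have "(x v)^2 \<le> 1^2" using \<open>(\<Sum>v\<in>I. (x v)^2) = 1\<close> by simp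
      then show ?thesis using abs_le_square_iff by (metis abs_one)
    qed
    then show ?thesis using that unfolding K_def B_def S_def
      by (auto simp: PiE_UNIV_domain abs_le_iff)
  qed
  have "x0 v = 0" if "v \<notin> I" for v
  proof -
    have "x0 \<in> B" using x0(1) unfolding K_def by auto
    then have "x0 v \<in> S v" unfolding B_def by (auto simp: PiE_UNIV_domain)
    then show ?thesis using that unfolding S_def by auto
  qed
  moreover have "(\<Sum>v\<in>I. (x0 v)^2) = 1" using x0(1) unfolding K_def by auto
  ultimately show ?thesis using x0(2) memK by blast
qed

lemma quad_zero:
  fixes c K :: real
  assumes "\<forall>t. 0 \<le> 2*t*c + t^2*K"
  shows "c = 0"
proof (rule ccontr)
  assume c: "c \<noteq> 0"
  define t where "t = - c / (\<bar>K\<bar> + 1)"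
  have pos: "\<bar>K\<bar> + 1 > 0" by simp
  have h0: "0 \<le> 2*t*c + t^2*K" using assms by simp
  have h1: "t^2*K \<le> t^2 * \<bar>K\<bar>" by (simp add: mult_left_mono)
  have h2: "t^2 * \<bar>K\<bar> < t^2 * (\<bar>K\<bar>+1)"
  proof -
    have "t \<noteq> 0" using c pos unfolding t_def by simp
    then have "t^2 > 0" by simp
    then show ?thesis by simp
  qed
  have gen: "2*(-c/a)*c + (-c/a)^2 * a = -(c^2) / a" if "a > 0" for a :: real
    using that by (simp add: field_simps power2_eq_square)
  have h3: "2*t*c + t^2 * (\<bar>K\<bar>+1) = -(c^2) / (\<bar>K\<bar>+1)" using gen[OF pos] unfolding t_def .
  have h4: "-(c^2) / (\<bar>K\<bar>+1) < 0" using c pos by (simp add: divide_neg_pos)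
  show False using h0 h1 h2 h3 h4 by linarith
qed

lemma sum_ind1:
  assumes "finite A" "v \<in> A"
  shows "(\<Sum>w\<in>A. f w * (if w = v then 1 else 0)) = (f v::real)"
        "(\<Sum>w\<in>A. (if w = v then 1 else 0) * f w) = (f v::real)"
  using assms by (subst sum.remove[of A v]; simp)+

context
  fixes V :: "'a set" and E :: "'a set set"
  assumes fV: "finite V" and neI: "Defs.interior V E \<noteq> {}"
begin

abbreviation "II \<equiv> Defs.interior V E"

lemma fII: "finite II" using fV unfolding Defs.interior_def by simp

lemma bf_restr:
  assumes "\<And>v. v \<in> II \<Longrightarrow> x' v = x v" "\<And>v. v \<in> II \<Longrightarrow> y' v = y v"
  shows "bf V E x' y' = bf V E x y"
proof -
  have "dirichlet_op V E x' v = dirichlet_op V E x v" if "v \<in> II" for v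
    unfolding dirichlet_op_def using assms that by simp
  then show ?thesis unfolding bf_def using assms by simp
qed

lemma bf_expand:
  "bf V E (\<lambda>w. x w + t * y w) (\<lambda>w. x w + t * y w) = bf V E x x + 2*t*bf V E x y + t^2 * bf V E y y"
proof -
  have d: "dirichlet_op V E (\<lambda>w. x w + t * y w) v = dirichlet_op V E x v + t * dirichlet_op V E y v" for v
    using dop_lin[of V E 1 x t y v] by simp
  have "bf V E (\<lambda>w. x w + t * y w) (\<lambda>w. x w + t * y w) = bf V E x x + t * (bf V E x y + bf V E y x) + t^2 * bf V E y y"
    unfolding bf_def d by (simp add: sum.distrib sum_distrib_left algebra_simps power2_eq_square)
  then show ?thesis using bf_sym[OF fV, of E y x] by simp
qed

lemma bf_scale: "bf V E (\<lambda>w. c * x w) (\<lambda>w. c * x w) = c^2 * bf V E x x"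
  unfolding bf_def dop_scale by (simp add: sum_distrib_left algebra_simps power2_eq_square)

lemma ipr_scale: "ipr V E (\<lambda>w. c * x w) (\<lambda>w. c * x w) = c^2 * ipr V E x x"
  unfolding ipr_def by (simp add: sum_distrib_left algebra_simps power2_eq_square)

lemma bf_cont: "continuous_on UNIV (\<lambda>x. bf V E x x)"
  unfolding bf_def dirichlet_op_def by (intro continuous_intros proj_cont)

lemma ipr_nonneg: "ipr V E x x \<ge> 0" unfolding ipr_def by (simp add: sum_nonneg)

lemma ipr_zero: "ipr V E x x = 0 \<Longrightarrow> v \<in> II \<Longrightarrow> x v = 0"
  unfolding ipr_def using fII by (simp add: sum_nonneg_eq_0_iff)

lemma eig_quot:
  assumes "\<forall>v\<in>II. dirichlet_op V E x v = \<mu> * x v"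
  shows "bf V E x x = \<mu> * ipr V E x x"
  unfolding bf_def ipr_def using assms by (simp add: sum_distrib_left algebra_simps)

lemma min_rayleigh:
  "\<exists>m. m \<in> dirichlet_eigenvalues V E \<and> (\<forall>x. m * ipr V E x x \<le> bf V E x x)"
proof -
  obtain x0 where x0s: "\<forall>v. v \<notin> II \<longrightarrow> x0 v = 0" and x0n: "(\<Sum>v\<in>II. (x0 v)^2) = 1"
    and x0m: "\<And>x. (\<forall>v. v \<notin> II \<longrightarrow> x v = 0) \<and> (\<Sum>v\<in>II. (x v)^2) = 1 \<Longrightarrow> bf V E x0 x0 \<le> bf V E x x"
    using exists_min[OF fII neI bf_cont] by blast
  define m where "m = bf V E x0 x0"
  have n1: "ipr V E x0 x0 = 1" using x0n unfolding ipr_def by (simp add: power2_eq_square)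
  have bound: "m * ipr V E x x \<le> bf V E x x" for x
  proof -
    define x' where "x' = (\<lambda>v. if v \<in> II then x v else 0)"
    have bx: "bf V E x' x' = bf V E x x" by (rule bf_restr) (auto simp: x'_def)
    have ix: "ipr V E x' x' = ipr V E x x" unfolding ipr_def x'_def by simp
    show ?thesis
    proof (cases "ipr V E x x = 0")
      case True
      have "x v = 0" if "v \<in> II" for v using ipr_zero[OF True that] .
      then have "bf V E x x = 0" unfolding bf_def by simp
      then show ?thesis using True by simp
    next
      case False
      then have p: "ipr V E x x > 0" using ipr_nonneg[of x] by simp
      define c where "c = 1 / sqrt (ipr V E x x)"
      define y where "y = (\<lambda>w. c * x' w)"
      have c2: "c^2 = 1 / ipr V E x x" unfolding c_def using p by (simp add: power_divide)
      have "ipr V E y y = 1" unfolding y_def ipr_scale ix c2 using p by simp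
      then have "(\<Sum>v\<in>II. (y v)^2) = 1" unfolding ipr_def by (simp add: power2_eq_square)
      moreover have "\<forall>v. v \<notin> II \<longrightarrow> y v = 0" unfolding y_def x'_def by simp
      ultimately have "m \<le> bf V E y y" unfolding m_def using x0m by blast
      also have "bf V E y y = bf V E x x / ipr V E x x" unfolding y_def bf_scale bx c2 by simp
      finally show ?thesis using p by (simp add: field_simps)
    qed
  qed
  have eig: "dirichlet_op V E x0 v = m * x0 v" if v: "v \<in> II" for v
  proof -
    define y where "y = (\<lambda>w. if w = v then 1::real else 0)"
    have "0 \<le> 2*t*(dirichlet_op V E x0 v - m * x0 v) + t^2 * (bf V E y y - m * ipr V E y y)" for t
    proof -
      have "m * ipr V E (\<lambda>w. x0 w + t * y w) (\<lambda>w. x0 w + t * y w) \<le> bf V E (\<lambda>w. x0 w + t * y w) (\<lambda>w. x0 w + t * y w)"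
        by (rule bound)
      moreover have "ipr V E (\<lambda>w. x0 w + t * y w) (\<lambda>w. x0 w + t * y w) = ipr V E x0 x0 + 2*t*ipr V E x0 y + t^2 * ipr V E y y"
        unfolding ipr_def by (simp add: sum.distrib sum_distrib_left algebra_simps power2_eq_square)
      moreover have "ipr V E x0 y = x0 v" unfolding ipr_def y_def using fII v by (rule sum_ind1(1))
      moreover have "bf V E x0 y = dirichlet_op V E x0 v" unfolding bf_def y_def using fII v by (rule sum_ind1(2))
      ultimately show ?thesis unfolding bf_expand n1 m_def by (simp add: algebra_simps)
    qed
    then have "dirichlet_op V E x0 v - m * x0 v = 0" by (intro quad_zero) blast
    then show ?thesis by simp
  qed
  have "\<exists>v\<in>II. x0 v \<noteq> 0"
  proof (rule ccontr)
    assume "\<not> ?thesis"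
    then have "ipr V E x0 x0 = 0" unfolding ipr_def by simp
    then show False using n1 by simp
  qed
  then have "m \<in> dirichlet_eigenvalues V E" unfolding dirichlet_eigenvalues_def using eig by blast
  then show ?thesis using bound by blast
qed

end

context
  fixes V :: "'a set" and E :: "'a set set"
  assumes fV: "finite V" and neI: "Defs.interior V E \<noteq> {}"
begin

lemma ipr_sym: "ipr V E x y = ipr V E y x" unfolding ipr_def by (simp add: mult.commute)

lemma eig_finite: "finite (dirichlet_eigenvalues V E)"
proof (rule ccontr)
  let ?I = "Defs.interior V E"
  have fI: "finite ?I" using fII[OF fV neI] .
  assume "infinite (dirichlet_eigenvalues V E)"
  then obtain S where S: "finite S" "card S = card ?I + 1" "S \<subseteq> dirichlet_eigenvalues V E"
    using infinite_arbitrarily_large by blast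
  define f where "f = (\<lambda>\<mu>. SOME x. (\<exists>v\<in>?I. x v \<noteq> 0) \<and> (\<forall>v\<in>?I. dirichlet_op V E x v = \<mu> * x v))"
  have f: "(\<exists>v\<in>?I. f \<mu> v \<noteq> 0) \<and> (\<forall>v\<in>?I. dirichlet_op V E (f \<mu>) v = \<mu> * f \<mu> v)" if "\<mu> \<in> S" for \<mu>
  proof -
    have "\<mu> \<in> dirichlet_eigenvalues V E" using S(3) that by auto
    then have "\<exists>x. (\<exists>v\<in>?I. x v \<noteq> 0) \<and> (\<forall>v\<in>?I. dirichlet_op V E x v = \<mu> * x v)"
      unfolding dirichlet_eigenvalues_def by simp
    then show ?thesis unfolding f_def by (rule someI_ex)
  qed
  have fpos: "ipr V E (f \<mu>) (f \<mu>) > 0" if mS: "\<mu> \<in> S" for \<mu>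
  proof -
    obtain v where v: "v \<in> ?I" "f \<mu> v \<noteq> 0" using f[OF mS] by auto
    have "ipr V E (f \<mu>) (f \<mu>) \<ge> 0" by (rule ipr_nonneg[OF fV neI])
    moreover have "ipr V E (f \<mu>) (f \<mu>) \<noteq> 0" using ipr_zero[OF fV neI _ v(1)] v(2) by blast
    ultimately show ?thesis by simp
  qed
  define e where "e = (\<lambda>\<mu> w. (1 / sqrt (ipr V E (f \<mu>) (f \<mu>))) * f \<mu> w)"
  have e_eig: "\<forall>v\<in>?I. dirichlet_op V E (e \<mu>) v = \<mu> * e \<mu> v" if "\<mu> \<in> S" for \<mu>
    unfolding e_def dop_scale using f[OF that] by simp
  have e_n: "ipr V E (e \<mu>) (e \<mu>) = 1" if "\<mu> \<in> S" for \<mu>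
  proof -
    have "ipr V E (e \<mu>) (e \<mu>) = (1 / sqrt (ipr V E (f \<mu>) (f \<mu>)))^2 * ipr V E (f \<mu>) (f \<mu>)"
      unfolding e_def by (rule ipr_scale[OF fV neI])
    then show ?thesis using fpos[OF that] by (simp add: power_divide)
  qed
  have e_o: "ipr V E (e \<mu>) (e \<nu>) = 0" if "\<mu> \<in> S" "\<nu> \<in> S" "\<mu> \<noteq> \<nu>" for \<mu> \<nu>
  proof -
    have a: "bf V E (e \<mu>) (e \<nu>) = \<mu> * ipr V E (e \<mu>) (e \<nu>)"
      unfolding bf_def ipr_def using e_eig[OF that(1)] by (simp add: sum_distrib_left algebra_simps)
    have b: "bf V E (e \<nu>) (e \<mu>) = \<nu> * ipr V E (e \<mu>) (e \<nu>)"
      unfolding bf_def ipr_def using e_eig[OF that(2)] by (simp add: sum_distrib_left algebra_simps)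
    have "bf V E (e \<mu>) (e \<nu>) = bf V E (e \<nu>) (e \<mu>)" by (rule bf_sym[OF fV])
    then have "\<mu> * ipr V E (e \<mu>) (e \<nu>) = \<nu> * ipr V E (e \<mu>) (e \<nu>)" unfolding a b .
    then show ?thesis using that(3) by simp
  qed
  have bessel: "(\<Sum>\<mu>\<in>S. (e \<mu> v)^2) \<le> 1" if v: "v \<in> ?I" for v
  proof -
    define b where "b = (\<lambda>w. if w = v then 1 else 0::real)"
    define s where "s = (\<lambda>w. \<Sum>\<mu>\<in>S. e \<mu> v * e \<mu> w)"
    have "0 \<le> (\<Sum>w\<in>?I. (b w - s w)^2)" by (simp add: sum_nonneg)
    also have "\<dots> = (\<Sum>w\<in>?I. b w * b w - 2 * (b w * s w) + s w * s w)"
      by (intro sum.cong refl) (simp add: power2_eq_square algebra_simps)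
    also have "\<dots> = (\<Sum>w\<in>?I. b w * b w) - 2 * (\<Sum>w\<in>?I. b w * s w) + (\<Sum>w\<in>?I. s w * s w)"
      by (simp add: sum.distrib sum_subtractf sum_distrib_left)
    also have "(\<Sum>w\<in>?I. b w * b w) = 1" unfolding b_def using fI v by (subst sum_ind1(2)) auto
    also have "(\<Sum>w\<in>?I. b w * s w) = s v" unfolding b_def using fI v by (rule sum_ind1(2))
    also have "s v = (\<Sum>\<mu>\<in>S. (e \<mu> v)^2)" unfolding s_def by (simp add: power2_eq_square)
    also have "(\<Sum>w\<in>?I. s w * s w) = (\<Sum>\<mu>\<in>S. \<Sum>\<nu>\<in>S. e \<mu> v * e \<nu> v * ipr V E (e \<mu>) (e \<nu>))"
    proof -
      have "(\<Sum>w\<in>?I. s w * s w) = (\<Sum>w\<in>?I. \<Sum>\<mu>\<in>S. \<Sum>\<nu>\<in>S. (e \<mu> v * e \<nu> v) * (e \<mu> w * e \<nu> w))"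
        unfolding s_def sum_product by (intro sum.cong refl) (simp add: mult_ac)
      also have "\<dots> = (\<Sum>\<mu>\<in>S. \<Sum>w\<in>?I. \<Sum>\<nu>\<in>S. (e \<mu> v * e \<nu> v) * (e \<mu> w * e \<nu> w))"
        by (rule sum.swap)
      also have "\<dots> = (\<Sum>\<mu>\<in>S. \<Sum>\<nu>\<in>S. \<Sum>w\<in>?I. (e \<mu> v * e \<nu> v) * (e \<mu> w * e \<nu> w))"
        by (intro sum.cong refl) (rule sum.swap)
      also have "\<dots> = (\<Sum>\<mu>\<in>S. \<Sum>\<nu>\<in>S. e \<mu> v * e \<nu> v * ipr V E (e \<mu>) (e \<nu>))"
        unfolding ipr_def by (simp add: sum_distrib_left)
      finally show ?thesis .
    qed
    also have "\<dots> = (\<Sum>\<mu>\<in>S. (e \<mu> v)^2)"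
    proof (rule sum.cong[OF refl])
      fix \<mu> assume m: "\<mu> \<in> S"
      have "(\<Sum>\<nu>\<in>S. e \<mu> v * e \<nu> v * ipr V E (e \<mu>) (e \<nu>)) = e \<mu> v * e \<mu> v * ipr V E (e \<mu>) (e \<mu>)"
        using S(1) m e_o[OF m] by (subst sum.remove[of S \<mu>]) auto
      then show "(\<Sum>\<nu>\<in>S. e \<mu> v * e \<nu> v * ipr V E (e \<mu>) (e \<nu>)) = (e \<mu> v)^2"
        using e_n[OF m] by (simp add: power2_eq_square)
    qed
    finally show ?thesis by simp
  qed
  have "real (card S) = (\<Sum>\<mu>\<in>S. ipr V E (e \<mu>) (e \<mu>))" using e_n by simp
  also have "\<dots> = (\<Sum>v\<in>?I. \<Sum>\<mu>\<in>S. (e \<mu> v)^2)"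
    unfolding ipr_def by (simp add: sum.swap[of _ S] power2_eq_square)
  also have "\<dots> \<le> (\<Sum>v\<in>?I. 1)" by (rule sum_mono) (rule bessel)
  also have "\<dots> = real (card ?I)" by simp
  finally show False using S(2) by simp
qed

lemma lambda_min_char:
  "lambda_min V E \<in> dirichlet_eigenvalues V E \<and> (\<forall>x. lambda_min V E * ipr V E x x \<le> bf V E x x)"
proof -
  obtain m where m: "m \<in> dirichlet_eigenvalues V E" "\<forall>x. m * ipr V E x x \<le> bf V E x x"
    using min_rayleigh[OF fV neI] by blast
  have ge: "m \<le> \<mu>" if mE: "\<mu> \<in> dirichlet_eigenvalues V E" for \<mu>
  proof -
    obtain x where x: "\<exists>v\<in>Defs.interior V E. x v \<noteq> 0" "\<forall>v\<in>Defs.interior V E. dirichlet_op V E x v = \<mu> * x v"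
      using mE unfolding dirichlet_eigenvalues_def by blast
    have p: "ipr V E x x > 0"
    proof -
      obtain v where v: "v \<in> Defs.interior V E" "x v \<noteq> 0" using x(1) by auto
      have "ipr V E x x \<noteq> 0" using ipr_zero[OF fV neI _ v(1)] v(2) by blast
      then show ?thesis using ipr_nonneg[OF fV neI, of x] by simp
    qed
    have "m * ipr V E x x \<le> bf V E x x" using m(2) by blast
    then have "m * ipr V E x x \<le> \<mu> * ipr V E x x" using eig_quot[OF fV neI x(2)] by simp
    then show ?thesis using p by simp
  qed
  have "lambda_min V E = m" unfolding lambda_min_def
    by (rule Min_eqI[OF eig_finite]) (use ge m in auto)
  then show ?thesis using m by simp
qed

end

lemma cycle_exists:
  assumes fW: "finite W" and neW: "W \<noteq> {}"
    and two: "\<forall>v\<in>W. \<exists>a b. a \<noteq> b \<and> a \<in> W \<and> b \<in> W \<and> {v,a}\<in>E \<and> {v,b}\<in>E"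
    and noloop: "\<forall>v. {v,v} \<notin> E"
  shows "\<exists>cs. set cs \<subseteq> W \<and> is_cycle E cs"
proof -
  define P where "P = (\<lambda>ps. distinct ps \<and> set ps \<subseteq> W \<and> ps \<noteq> [] \<and> (\<forall>i. Suc i < length ps \<longrightarrow> {ps!i, ps!Suc i} \<in> E))"
  obtain w0 where w0: "w0 \<in> W" using neW by auto
  have P0: "P [w0]" unfolding P_def using w0 by auto
  have bnd: "\<forall>ps. P ps \<longrightarrow> length ps < card W + 1"
  proof (intro allI impI)
    fix ps assume "P ps"
    then have "card (set ps) \<le> card W" unfolding P_def using fW by (intro card_mono) auto
    then show "length ps < card W + 1" using \<open>P ps\<close> distinct_card unfolding P_def by fastforce
  qed
  obtain ps where Pps: "P ps" and maxl: "\<And>qs. P qs \<Longrightarrow> length qs \<le> length ps"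
    using ex_has_greatest_nat[OF P0 bnd] by blast
  have psne: "ps \<noteq> []" and dps: "distinct ps" and psW: "set ps \<subseteq> W"
    and pse: "\<And>i. Suc i < length ps \<Longrightarrow> {ps!i, ps!Suc i} \<in> E"
    using Pps unfolding P_def by auto
  define p0 where "p0 = ps!0"
  have p0W: "p0 \<in> W" using psW psne unfolding p0_def by (auto simp: nth_mem subsetD)
  obtain a b where ab: "a \<noteq> b" "a \<in> W" "b \<in> W" "{p0,a}\<in>E" "{p0,b}\<in>E" using two p0W by blast
  obtain u where u: "u \<in> W" "{p0,u} \<in> E" "length ps \<ge> 2 \<longrightarrow> u \<noteq> ps!1"
    using ab by metis
  have up0: "u \<noteq> p0" using u(2) noloop by auto
  have "u \<in> set ps"
  proof (rule ccontr)
    assume nu: "u \<notin> set ps"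
    have "P (u # ps)" unfolding P_def
    proof (intro conjI allI impI)
      show "distinct (u # ps)" using nu dps by simp
      show "set (u # ps) \<subseteq> W" using u(1) psW by simp
      show "u # ps \<noteq> []" by simp
      fix i assume i: "Suc i < length (u # ps)"
      show "{(u # ps) ! i, (u # ps) ! Suc i} \<in> E"
      proof (cases i)
        case 0
        then show ?thesis using u(2) unfolding p0_def by (simp add: insert_commute)
      next
        case (Suc j)
        then show ?thesis using pse i by simp
      qed
    qed
    then show False using maxl by fastforce
  qed
  then obtain j where j: "j < length ps" "ps!j = u" by (auto simp: in_set_conv_nth)
  have j0: "j \<noteq> 0" using j up0 unfolding p0_def by (cases j) auto
  have j1: "j \<noteq> 1" using j u(3) by auto
  define cs where "cs = take (Suc j) ps"
  have lcs: "length cs = Suc j" unfolding cs_def using j by simp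
  have "is_cycle E cs" unfolding is_cycle_def
  proof (intro conjI allI impI)
    show "3 \<le> length cs" using lcs j0 j1 by simp
    show "distinct cs" unfolding cs_def using dps by simp
    fix i assume i: "i < length cs"
    show "{cs ! i, cs ! ((i + 1) mod length cs)} \<in> E"
    proof (cases "i = j")
      case True
      then have "(i+1) mod length cs = 0" using lcs by simp
      then show ?thesis using True u(2) j unfolding cs_def p0_def by (simp add: insert_commute)
    next
      case False
      then have "i < j" using i lcs by simp
      then have "(i+1) mod length cs = Suc i" using lcs by simp
      then show ?thesis using pse[of i] \<open>i < j\<close> j unfolding cs_def by simp
    qed
  qed
  moreover have "set cs \<subseteq> W" unfolding cs_def using psW set_take_subset by fastforce
  ultimately show ?thesis by blast
qed

definition pc :: "'a set set \<Rightarrow> 'a set \<Rightarrow> 'a set \<Rightarrow> nat" where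
  "pc E X Y = card {(u,w). u \<in> X \<and> w \<in> Y \<and> {u,w} \<in> E}"

lemma pc_set_eq: "{(u,w). u \<in> X \<and> w \<in> Y \<and> {u,w} \<in> E} = Sigma X (\<lambda>u. {w\<in>Y. {u,w}\<in>E})"
  by auto

lemma pc_sum: "finite X \<Longrightarrow> finite Y \<Longrightarrow> pc E X Y = (\<Sum>u\<in>X. card {w\<in>Y. {u,w}\<in>E})"
  unfolding pc_def pc_set_eq by (subst card_SigmaI) auto

lemma pc_sym: "pc E X Y = pc E Y X"
proof -
  have "{(u,w). u \<in> X \<and> w \<in> Y \<and> {u,w} \<in> E} = (\<lambda>(a,b). (b,a)) ` {(u,w). u \<in> Y \<and> w \<in> X \<and> {u,w} \<in> E}"
    by (auto simp: insert_commute image_iff)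
  moreover have "inj_on (\<lambda>(a,b). (b,a)) S" for S :: "('a \<times> 'a) set" by (auto simp: inj_on_def)
  ultimately show ?thesis unfolding pc_def by (simp add: card_image)
qed

lemma pc_union2:
  assumes "finite X" "finite Y" "finite Z" "Y \<inter> Z = {}"
  shows "pc E X (Y \<union> Z) = pc E X Y + pc E X Z"
proof -
  have "card {w\<in>Y \<union> Z. {u,w}\<in>E} = card {w\<in>Y. {u,w}\<in>E} + card {w\<in>Z. {u,w}\<in>E}" for u
  proof -
    have "{w\<in>Y \<union> Z. {u,w}\<in>E} = {w\<in>Y. {u,w}\<in>E} \<union> {w\<in>Z. {u,w}\<in>E}" by auto
    then show ?thesis using assms by (simp add: card_Un_disjoint disjoint_iff)
  qed
  then show ?thesis using assms by (simp add: pc_sum sum.distrib)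
qed

lemma pc_union1:
  assumes "finite X" "finite Y" "finite Z" "X \<inter> Y = {}"
  shows "pc E (X \<union> Y) Z = pc E X Z + pc E Y Z"
  using pc_union2[OF assms(3,1,2,4), of E] by (simp add: pc_sym)

lemma forest_bound:
  assumes "finite Y" "Y \<noteq> {}" "\<forall>v. {v,v} \<notin> E" "\<not> (\<exists>cs. set cs \<subseteq> Y \<and> is_cycle E cs)"
  shows "pc E Y Y + 2 \<le> 2 * card Y"
  using assms
proof (induction "card Y" arbitrary: Y rule: less_induct)
  case less
  have fY: "finite Y" by fact
  show ?case
  proof (cases "\<forall>v\<in>Y. \<exists>a b. a \<noteq> b \<and> a \<in> Y \<and> b \<in> Y \<and> {v,a}\<in>E \<and> {v,b}\<in>E")
    case True
    then show ?thesis using cycle_exists[OF fY less.prems(2) True less.prems(3)] less.prems(4) by blast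
  next
    case False
    then obtain y where y: "y \<in> Y" and ny: "\<not> (\<exists>a b. a \<noteq> b \<and> a \<in> Y \<and> b \<in> Y \<and> {y,a}\<in>E \<and> {y,b}\<in>E)"
      by blast
    have c1: "card {w\<in>Y - {y}. {y,w}\<in>E} \<le> Suc 0"
      using ny fY by (subst card_le_Suc0_iff_eq) auto
    have e0: "{(u, w). u \<in> {y} \<and> w \<in> {y} \<and> {u, w} \<in> E} = {}" using less.prems(3) by auto
    have pyy: "pc E {y} {y} = 0" unfolding pc_def e0 by simp
    have p1: "pc E {y} (Y - {y}) \<le> 1" using c1 fY by (simp add: pc_sum)
    have p2: "pc E (Y - {y}) {y} \<le> 1" using p1 by (simp add: pc_sym)
    have Ysplit: "Y = (Y - {y}) \<union> {y}" using y by auto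
    have "pc E Y Y = pc E (Y - {y}) (Y - {y}) + pc E (Y - {y}) {y} + (pc E {y} (Y - {y}) + pc E {y} {y})"
      apply (subst Ysplit, subst pc_union1)
      using fY apply auto[4]
      apply (subst (1 2) Ysplit, subst (1 2) pc_union2)
      using fY by auto
    then have eq: "pc E Y Y \<le> pc E (Y - {y}) (Y - {y}) + 2" using pyy p1 p2 by simp
    show ?thesis
    proof (cases "Y - {y} = {}")
      case True
      then have "Y = {y}" using y by auto
      then show ?thesis using pyy by simp
    next
      case False
      have "pc E (Y - {y}) (Y - {y}) + 2 \<le> 2 * card (Y - {y})"
      proof (rule less.hyps)
        show "card (Y - {y}) < card Y" using fY y by (rule card_Diff1_less)
        show "\<not> (\<exists>cs. set cs \<subseteq> Y - {y} \<and> is_cycle E cs)" using less.prems(4) by blast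
      qed (use fY False less.prems(3) in auto)
      moreover have "card (Y - {y}) + 1 = card Y" using fY y
        by (metis One_nat_def Suc_eq_plus1 card_Suc_Diff1)
      ultimately show ?thesis using eq by simp
    qed
  qed
qed

lemma simple_edge:
  assumes "simple_graph V E" "{u,w} \<in> E"
  shows "u \<in> V \<and> w \<in> V \<and> u \<noteq> w"
proof -
  obtain a b where ab: "{u,w} = {a,b}" "a \<noteq> b" "a \<in> V" "b \<in> V"
    using assms unfolding simple_graph_def by blast
  then show ?thesis by (auto simp: doubleton_eq_iff)
qed

lemma simple_noloop: "simple_graph V E \<Longrightarrow> {v,v} \<notin> E"
  using simple_edge by fastforce

lemma simple_finite: "simple_graph V E \<Longrightarrow> finite V"
  unfolding simple_graph_def by simp

lemma deg_V: "simple_graph V E \<Longrightarrow> deg E v = card {w\<in>V. {v,w}\<in>E}"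
  unfolding deg_def by (metis (lifting) simple_edge)

lemma sum_deg: "simple_graph V E \<Longrightarrow> X \<subseteq> V \<Longrightarrow> (\<Sum>v\<in>X. deg E v) = pc E X V"
  by (simp add: pc_sum deg_V simple_finite finite_subset)

lemma gdist_parent:
  assumes conn: "connected_graph V E" and r: "r \<in> V" and v: "v \<in> V" "v \<noteq> r"
  shows "\<exists>u. {v,u}\<in>E \<and> gdist E u r < gdist E v r"
proof -
  define P where "P = (\<lambda>u n. \<exists>ps. is_walk E ps \<and> length ps = Suc n \<and> hd ps = u \<and> last ps = r)"
  obtain ps where ps: "is_walk E ps" "hd ps = v" "last ps = r"
    using conn r v unfolding connected_graph_def by blast
  have "P v (length ps - 1)" unfolding P_def using ps by (intro exI[of _ ps]) (auto simp: is_walk_def)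
  then have Pm: "P v (gdist E v r)" unfolding gdist_def P_def by (rule LeastI)
  then obtain qs where qs: "is_walk E qs" "length qs = Suc (gdist E v r)" "hd qs = v" "last qs = r"
    unfolding P_def by blast
  have m0: "gdist E v r \<noteq> 0"
  proof
    assume "gdist E v r = 0"
    then have "length qs = 1" using qs by simp
    then have "hd qs = last qs" by (cases qs) auto
    then show False using qs v by simp
  qed
  define u where "u = qs ! 1"
  have lq: "length qs \<ge> 2" using qs m0 by simp
  have "qs \<noteq> []" using lq by auto
  then have q0: "qs ! 0 = v" using qs(3) hd_conv_nth[of qs] by simp
  have e: "{v,u} \<in> E" using qs(1) lq q0 unfolding is_walk_def u_def
    by (metis One_nat_def Suc_1 Suc_le_lessD)
  have "P u (gdist E v r - 1)" unfolding P_def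
  proof (intro exI[of _ "tl qs"] conjI)
    have "tl qs \<noteq> []" using lq by (cases qs) auto
    then show "is_walk E (tl qs)" using qs(1) lq unfolding is_walk_def by (auto simp: nth_tl)
    show "length (tl qs) = Suc (gdist E v r - 1)" using qs m0 by simp
    have "tl qs \<noteq> []" using lq by (cases qs) auto
    then show "hd (tl qs) = u" unfolding u_def using lq by (simp add: hd_conv_nth nth_tl)
    show "last (tl qs) = r" using qs m0 by (cases qs) auto
  qed
  then have "gdist E u r \<le> gdist E v r - 1" unfolding gdist_def P_def by (rule Least_le)
  then show ?thesis using e m0 by (intro exI[of _ u]) auto
qed

lemma pc_lower:
  assumes s: "simple_graph V E" and c: "connected_graph V E" and ne: "V \<noteq> {}"
  shows "2 * (card V - 1) \<le> pc E V V"
proof -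
  obtain r where r: "r \<in> V" using ne by auto
  have fV: "finite V" using s by (rule simple_finite)
  define par where "par = (\<lambda>v. SOME u. {v,u}\<in>E \<and> gdist E u r < gdist E v r)"
  have par: "{v, par v}\<in>E \<and> gdist E (par v) r < gdist E v r" if vv: "v \<in> V - {r}" for v
  proof -
    have "\<exists>u. {v,u}\<in>E \<and> gdist E u r < gdist E v r" using gdist_parent[OF c r, of v] vv by blast
    then show ?thesis unfolding par_def by (rule someI_ex)
  qed
  define A where "A = (\<lambda>v. (v, par v)) ` (V - {r})"
  define B where "B = (\<lambda>v. (par v, v)) ` (V - {r})"
  have cA: "card A = card V - 1" unfolding A_def using r fV
    by (subst card_image) (simp_all add: inj_on_def)
  have cB: "card B = card V - 1" unfolding B_def using r fV
    by (subst card_image) (simp_all add: inj_on_def)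
  have dAB: "A \<inter> B = {}"
  proof -
    have False if vw: "v \<in> V - {r}" "w \<in> V - {r}" "(v, par v) = (par w, w)" for v w
    proof -
      have "v = par w \<and> par v = w" using vw(3) by (metis prod.inject)
      then have a: "v = par w" and b: "par v = w" by blast+
      have g1: "gdist E (par v) r < gdist E v r" and g2: "gdist E (par w) r < gdist E w r"
        using par[OF vw(1)] par[OF vw(2)] by blast+
      have "gdist E w r < gdist E v r" using g1 b by simp
      moreover have "gdist E v r < gdist E w r" using g2 a by simp
      ultimately show False by simp
    qed
    then show ?thesis unfolding A_def B_def by blast
  qed
  have sub: "A \<union> B \<subseteq> {(u,w). u \<in> V \<and> w \<in> V \<and> {u,w} \<in> E}"
  proof
    fix p assume "p \<in> A \<union> B"
    then obtain v where v: "v \<in> V - {r}" "p = (v, par v) \<or> p = (par v, v)" unfolding A_def B_def by blast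
    have e: "{v, par v} \<in> E" using par[OF v(1)] by simp
    then have "par v \<in> V" using simple_edge[OF s e] by simp
    then show "p \<in> {(u,w). u \<in> V \<and> w \<in> V \<and> {u,w} \<in> E}" using v e by (auto simp: insert_commute)
  qed
  have fin: "finite {(u,w). u \<in> V \<and> w \<in> V \<and> {u,w} \<in> E}"
    by (rule finite_subset[of _ "V \<times> V"]) (use fV in auto)
  have x1: "card (A \<union> B) = 2 * (card V - 1)"
    using cA cB dAB fV finite_subset[OF sub fin] by (simp add: card_Un_disjoint)
  have x2: "card (A \<union> B) \<le> pc E V V" unfolding pc_def by (rule card_mono[OF fin sub])
  show ?thesis using x1 x2 by simp
qed

lemma tree_degsum:
  assumes "is_tree V E"
  shows "(\<Sum>v\<in>V. deg E v) = 2 * (card V - 1)"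
proof -
  have s: "simple_graph V E" and ne: "V \<noteq> {}" and c: "connected_graph V E"
    and nc: "\<not> (\<exists>cs. set cs \<subseteq> V \<and> is_cycle E cs)" using assms unfolding is_tree_def by auto
  have "pc E V V + 2 \<le> 2 * card V"
    using forest_bound[OF simple_finite[OF s] ne _ nc] simple_noloop[OF s] by blast
  moreover have "2 * (card V - 1) \<le> pc E V V" by (rule pc_lower[OF s c ne])
  ultimately have "pc E V V = 2 * (card V - 1)" by linarith
  then show ?thesis using sum_deg[OF s] by simp
qed

locale slo =
  fixes xs :: "'a list" and D :: "nat list" and k :: nat
  assumes dist: "distinct xs" and kpos: "1 \<le> k" and kn: "k < length xs"
    and lenD: "length D = k" and D2: "\<And>i. i < k \<Longrightarrow> 2 \<le> D!i" and sortD: "sorted D"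
    and sumD: "sum_list D + 2 = length xs + k"
begin

abbreviation "n \<equiv> length xs"

definition sl :: "nat \<Rightarrow> nat" where
  "sl i = (if i = 0 then D!0 else if i < k then D!i - 1 else 0)"

definition cum :: "nat \<Rightarrow> nat" where
  "cum i = (\<Sum>m<i. sl m)"

definition par :: "nat \<Rightarrow> nat" where
  "par j = (LEAST i. j \<le> cum (Suc i))"

lemma cum_0[simp]: "cum 0 = 0" unfolding cum_def by simp

lemma cum_Suc: "cum (Suc i) = cum i + sl i" unfolding cum_def by simp

lemma cum_mono: "i \<le> i' \<Longrightarrow> cum i \<le> cum i'"
  unfolding cum_def by (rule sum_mono2) auto

lemma cum_D: "1 \<le> i \<Longrightarrow> i \<le> k \<Longrightarrow> cum i + (i - 1) = (\<Sum>m<i. D!m)"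
proof (induction i)
  case 0 then show ?case by simp
next
  case (Suc i)
  show ?case
  proof (cases "i = 0")
    case True then show ?thesis by (simp add: cum_def sl_def)
  next
    case False
    then have "cum i + (i - 1) = (\<Sum>m<i. D!m)" using Suc by simp
    moreover have "2 \<le> D!i" using Suc.prems D2 by simp
    ultimately show ?thesis using False Suc.prems by (simp add: cum_Suc sl_def)
  qed
qed

lemma cum_k: "cum k = n - 1"
proof -
  have "sum_list D = (\<Sum>m<k. D!m)" using lenD by (simp add: sum_list_sum_nth atLeast0LessThan)
  then show ?thesis using cum_D[OF kpos le_refl] sumD kpos by simp
qed

lemma cum_ge: "1 \<le> i \<Longrightarrow> i \<le> k \<Longrightarrow> i + 1 \<le> cum i"
proof (induction i)
  case 0 then show ?case by simp
next
  case (Suc i)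
  show ?case
  proof (cases "i = 0")
    case True
    then show ?thesis using D2[of 0] kpos by (simp add: cum_def sl_def)
  next
    case False
    then have "i + 1 \<le> cum i" using Suc by simp
    moreover have "2 \<le> D!i" using Suc.prems D2 by simp
    ultimately show ?thesis using False Suc.prems by (simp add: cum_Suc sl_def)
  qed
qed

lemma cum_const: "k \<le> i \<Longrightarrow> cum i = cum k"
proof (induction i)
  case 0 then show ?case by simp
next
  case (Suc i)
  show ?case
  proof (cases "k = Suc i")
    case True then show ?thesis by simp
  next
    case False
    then have "k \<le> i" using Suc.prems by simp
    then show ?thesis using Suc.IH kpos by (simp add: cum_Suc sl_def)
  qed
qed

lemma cum_le: "cum i \<le> n - 1"
  by (metis cum_const cum_k cum_mono nat_le_linear)

lemma par_props:
  assumes "1 \<le> j" "j < n"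
  shows "cum (par j) < j" "j \<le> cum (Suc (par j))" "par j < k" "par j < j"
proof -
  have ex: "j \<le> cum (Suc (k - 1))" using assms cum_k kpos by simp
  show j1: "j \<le> cum (Suc (par j))" unfolding par_def by (rule LeastI[of "\<lambda>i. _ \<le> cum (Suc i)", OF ex])
  have pk: "par j \<le> k - 1" unfolding par_def by (rule Least_le[of "\<lambda>i. _ \<le> cum (Suc i)", OF ex])
  then show "par j < k" using kpos by simp
  show c: "cum (par j) < j"
  proof (cases "par j")
    case 0 then show ?thesis using assms by simp
  next
    case (Suc i)
    have "\<not> j \<le> cum (Suc i)"
    proof
      assume "j \<le> cum (Suc i)"
      then have "par j \<le> i" unfolding par_def by (rule Least_le)
      then show False using Suc by simp
    qed
    then show ?thesis using Suc by simp
  qed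
  show "par j < j"
  proof (cases "par j = 0")
    case True then show ?thesis using assms by simp
  next
    case False
    then have "par j + 1 \<le> cum (par j)" using cum_ge pk kpos by simp
    then show ?thesis using c by simp
  qed
qed

lemma par_unique:
  assumes "cum i < j" "j \<le> cum (Suc i)"
  shows "par j = i"
proof -
  have le: "par j \<le> i" unfolding par_def by (rule Least_le) (rule assms(2))
  have "j \<le> cum (Suc (par j))" unfolding par_def by (rule LeastI) (rule assms(2))
  moreover have "\<not> par j < i"
  proof
    assume "par j < i"
    then have "cum (Suc (par j)) \<le> cum i" by (intro cum_mono) simp
    then show False using assms(1) \<open>j \<le> cum (Suc (par j))\<close> by simp
  qed
  ultimately show ?thesis using le by simp
qed

lemma par_mono:
  assumes "j \<le> j'" "j' < n"
  shows "par j \<le> par j'"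
proof -
  have ex: "j' \<le> cum (Suc (k - 1))" using assms cum_k kpos by simp
  have "j' \<le> cum (Suc (par j'))" unfolding par_def by (rule LeastI[of "\<lambda>i. _ \<le> cum (Suc i)", OF ex])
  then have "j \<le> cum (Suc (par j'))" using assms by simp
  then show ?thesis unfolding par_def by (rule Least_le)
qed

lemma children_set:
  assumes "i < n"
  shows "{j. 1 \<le> j \<and> j < n \<and> par j = i} = {Suc (cum i) .. cum (Suc i)}"
proof
  show "{j. 1 \<le> j \<and> j < n \<and> par j = i} \<subseteq> {Suc (cum i) .. cum (Suc i)}"
    using par_props by fastforce
  show "{Suc (cum i) .. cum (Suc i)} \<subseteq> {j. 1 \<le> j \<and> j < n \<and> par j = i}"
  proof
    fix j assume j: "j \<in> {Suc (cum i) .. cum (Suc i)}"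
    have "cum (Suc i) \<le> n - 1" by (rule cum_le)
    then have "j < n" using j kn by auto
    moreover have "par j = i" using j by (intro par_unique) auto
    ultimately show "j \<in> {j. 1 \<le> j \<and> j < n \<and> par j = i}" using j by auto
  qed
qed

lemma children_card:
  assumes "i < n"
  shows "card {j. 1 \<le> j \<and> j < n \<and> par j = i} = sl i"
  unfolding children_set[OF assms] by (simp add: cum_Suc)

end

function dep :: "(nat \<Rightarrow> nat) \<Rightarrow> nat \<Rightarrow> nat" where
  "dep p j = (if j = 0 \<or> \<not> p j < j then 0 else Suc (dep p (p j)))"
  by auto
termination by (relation "Wellfounded.measure snd") auto

function pth :: "'a list \<Rightarrow> (nat \<Rightarrow> nat) \<Rightarrow> nat \<Rightarrow> 'a list" where
  "pth ys p j = (if j = 0 \<or> \<not> p j < j then [ys!j] else ys!j # pth ys p (p j))"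
  by auto
termination by (relation "Wellfounded.measure (\<lambda>(ys,p,j). j)") auto

declare dep.simps[simp del] pth.simps[simp del]

lemma walk_Cons:
  assumes "is_walk E ps" "{x, hd ps} \<in> E"
  shows "is_walk E (x # ps)"
  unfolding is_walk_def
proof (intro conjI allI impI)
  show "x # ps \<noteq> []" by simp
  fix i assume i: "Suc i < length (x # ps)"
  show "{(x # ps) ! i, (x # ps) ! Suc i} \<in> E"
  proof (cases i)
    case 0
    then show ?thesis using assms by (simp add: is_walk_def hd_conv_nth)
  next
    case (Suc i')
    then show ?thesis using assms i by (simp add: is_walk_def)
  qed
qed

lemma walk_rev:
  assumes "is_walk E ps"
  shows "is_walk E (rev ps)"
  unfolding is_walk_def
proof (intro conjI allI impI)
  show "rev ps \<noteq> []" using assms by (simp add: is_walk_def)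
  fix i assume i: "Suc i < length (rev ps)"
  define m where "m = length ps - Suc (Suc i)"
  have m: "Suc m < length ps" using i unfolding m_def by simp
  have a: "rev ps ! i = ps ! Suc m" using i unfolding m_def by (simp add: rev_nth Suc_diff_Suc)
  have b: "rev ps ! Suc i = ps ! m" using i unfolding m_def by (simp add: rev_nth)
  show "{rev ps ! i, rev ps ! Suc i} \<in> E" unfolding a b using assms m
    by (simp add: is_walk_def insert_commute)
qed

lemma walk_app:
  assumes "is_walk E ps" "is_walk E qs" "last ps = hd qs"
  shows "is_walk E (ps @ tl qs)"
  using assms
proof (induction ps)
  case Nil then show ?case by (simp add: is_walk_def)
next
  case (Cons x ps)
  show ?case
  proof (cases "ps = []")
    case True
    then have "x = hd qs" using Cons.prems by simp
    moreover have "qs \<noteq> []" using Cons.prems by (simp add: is_walk_def)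
    ultimately show ?thesis using Cons.prems True by (cases qs) auto
  next
    case False
    have wps: "is_walk E ps" using Cons.prems(1) False unfolding is_walk_def
      by (metis Suc_less_eq length_Cons nth_Cons_Suc)
    have "is_walk E (ps @ tl qs)" using Cons.IH[OF wps Cons.prems(2)] Cons.prems(3) False by simp
    moreover have "{x, hd (ps @ tl qs)} \<in> E" using Cons.prems(1) False unfolding is_walk_def
      by (metis hd_append2 hd_conv_nth length_Cons length_greater_0_conv nth_Cons_0 nth_Cons_Suc Suc_less_eq)
    ultimately show ?thesis using walk_Cons by fastforce
  qed
qed

context slo
begin

definition Est :: "'a set set" where
  "Est = {{xs!(par j), xs!j} | j. 1 \<le> j \<and> j < n}"

definition idx :: "'a \<Rightarrow> nat" where
  "idx v = (THE i. i < n \<and> xs!i = v)"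

lemma idx_nth: "i < n \<Longrightarrow> idx (xs!i) = i"
  unfolding idx_def using dist by (intro the_equality) (auto simp: nth_eq_iff_index_eq)

lemma idx_mem: "v \<in> set xs \<Longrightarrow> idx v < n \<and> xs!(idx v) = v"
  by (metis idx_nth in_set_conv_nth)

lemma nth_inj: "a < n \<Longrightarrow> b < n \<Longrightarrow> xs!a = xs!b \<longleftrightarrow> a = b"
  using dist by (simp add: nth_eq_iff_index_eq)

lemma edge_form: "e \<in> Est \<Longrightarrow> \<exists>j. 1 \<le> j \<and> j < n \<and> e = {xs!(par j), xs!j}"
  unfolding Est_def by blast

lemma edge_in: "1 \<le> j \<Longrightarrow> j < n \<Longrightarrow> {xs!(par j), xs!j} \<in> Est"
  unfolding Est_def by blast

lemma edge_iff:
  assumes a: "a < n" and b: "b < n"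
  shows "{xs!a, xs!b} \<in> Est \<longleftrightarrow> (1 \<le> b \<and> a = par b) \<or> (1 \<le> a \<and> b = par a)"
proof
  assume "{xs!a, xs!b} \<in> Est"
  then obtain j where j: "1 \<le> j" "j < n" "{xs!a, xs!b} = {xs!(par j), xs!j}"
    using edge_form by blast
  have pj: "par j < n" using par_props[OF j(1,2)] j(2) by simp
  from j(3) have "(xs!a = xs!(par j) \<and> xs!b = xs!j) \<or> (xs!a = xs!j \<and> xs!b = xs!(par j))"
    by (auto simp: doubleton_eq_iff)
  then have "(a = par j \<and> b = j) \<or> (a = j \<and> b = par j)"
    using nth_inj[OF a pj] nth_inj[OF b j(2)] nth_inj[OF a j(2)] nth_inj[OF b pj] by blast
  then show "(1 \<le> b \<and> a = par b) \<or> (1 \<le> a \<and> b = par a)" using j(1) by blast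
next
  assume "(1 \<le> b \<and> a = par b) \<or> (1 \<le> a \<and> b = par a)"
  then show "{xs!a, xs!b} \<in> Est"
    using edge_in[of b] edge_in[of a] a b by (auto simp: insert_commute)
qed

lemma edge_mem: "{v, w} \<in> Est \<Longrightarrow> v \<in> set xs \<and> w \<in> set xs"
proof -
  assume "{v, w} \<in> Est"
  then obtain j where j: "1 \<le> j" "j < n" "{v,w} = {xs!(par j), xs!j}" using edge_form by blast
  have "par j < n" using par_props[OF j(1,2)] j(2) by simp
  then show ?thesis using j by (auto simp: doubleton_eq_iff)
qed

lemma simple: "simple_graph (set xs) Est"
  unfolding simple_graph_def
proof (intro conjI ballI)
  show "finite (set xs)" by simp
  fix e assume "e \<in> Est"
  then obtain j where j: "1 \<le> j" "j < n" "e = {xs!(par j), xs!j}" using edge_form by blast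
  have p: "par j < j" "par j < n" using par_props[OF j(1,2)] j(2) by auto
  have "xs!(par j) \<noteq> xs!j" using nth_inj[OF p(2) j(2)] p(1) by simp
  moreover have "xs!(par j) \<in> set xs" "xs!j \<in> set xs" using p(2) j(2) by simp_all
  ultimately show "\<exists>v w. e = {v, w} \<and> v \<noteq> w \<and> v \<in> set xs \<and> w \<in> set xs" using j(3) by blast
qed

lemma nbrs:
  assumes i: "i < n"
  shows "{w. {xs!i, w} \<in> Est} = (\<lambda>b. xs!b) ` ({b. 1 \<le> b \<and> b < n \<and> par b = i} \<union> (if 1 \<le> i then {par i} else {}))"
proof
  show "{w. {xs!i, w} \<in> Est} \<subseteq> (\<lambda>b. xs!b) ` ({b. 1 \<le> b \<and> b < n \<and> par b = i} \<union> (if 1 \<le> i then {par i} else {}))"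
  proof
    fix w assume w: "w \<in> {w. {xs!i, w} \<in> Est}"
    then have "w \<in> set xs" using edge_mem by blast
    then obtain b where b: "b < n" "w = xs!b" by (auto simp: in_set_conv_nth)
    then have "(1 \<le> b \<and> i = par b) \<or> (1 \<le> i \<and> b = par i)" using w edge_iff[OF i b(1)] by simp
    then show "w \<in> (\<lambda>b. xs!b) ` ({b. 1 \<le> b \<and> b < n \<and> par b = i} \<union> (if 1 \<le> i then {par i} else {}))"
      using b by auto
  qed
next
  show "(\<lambda>b. xs!b) ` ({b. 1 \<le> b \<and> b < n \<and> par b = i} \<union> (if 1 \<le> i then {par i} else {})) \<subseteq> {w. {xs!i, w} \<in> Est}"
  proof
    fix w assume "w \<in> (\<lambda>b. xs!b) ` ({b. 1 \<le> b \<and> b < n \<and> par b = i} \<union> (if 1 \<le> i then {par i} else {}))"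
    then obtain b where b: "w = xs!b" "(1 \<le> b \<and> b < n \<and> par b = i) \<or> (1 \<le> i \<and> b = par i)"
      by (auto split: if_splits)
    have bn: "b < n" using b(2) par_props[of i] i by auto
    show "w \<in> {w. {xs!i, w} \<in> Est}" using edge_iff[OF i bn] b by auto
  qed
qed

lemma deg_Est:
  assumes i: "i < n"
  shows "deg Est (xs!i) = sl i + (if i = 0 then 0 else 1)"
proof -
  let ?C = "{b. 1 \<le> b \<and> b < n \<and> par b = i}"
  let ?P = "(if 1 \<le> i then {par i} else {})"
  have sub: "?C \<union> ?P \<subseteq> {..<n}" using par_props[of i] i by (auto split: if_splits)
  have inj: "inj_on (\<lambda>b. xs!b) (?C \<union> ?P)"
    by (rule inj_on_subset[OF _ sub]) (use nth_inj in \<open>auto simp: inj_on_def\<close>)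
  have disj: "?C \<inter> ?P = {}"
  proof -
    have False if "1 \<le> i" "1 \<le> par i" "par (par i) = i"
    proof -
      have "par i < i" using par_props[of i] that(1) i by simp
      moreover have "par (par i) < par i" using par_props[of "par i"] that(2) \<open>par i < i\<close> i by simp
      ultimately show False using that(3) by simp
    qed
    then show ?thesis by auto
  qed
  have "deg Est (xs!i) = card (?C \<union> ?P)"
    unfolding deg_def nbrs[OF i] by (rule card_image[OF inj])
  also have "\<dots> = card ?C + card ?P" using disj
    by (intro card_Un_disjoint) (auto split: if_splits)
  also have "card ?C = sl i" by (rule children_card[OF i])
  finally show ?thesis by auto
qed

lemma deg_int: "i < k \<Longrightarrow> deg Est (xs!i) = D!i"
  using deg_Est[of i] kn D2[of i] by (simp add: sl_def)

lemma deg_leaf: "k \<le> i \<Longrightarrow> i < n \<Longrightarrow> deg Est (xs!i) = 1"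
  using deg_Est[of i] kpos by (simp add: sl_def)

end

context slo
begin

lemma dep_0[simp]: "dep par 0 = 0" by (simp add: dep.simps)

lemma dep_step: "1 \<le> j \<Longrightarrow> j < n \<Longrightarrow> dep par j = Suc (dep par (par j))"
  using par_props[of j] by (subst dep.simps) simp

lemma pth_props:
  "j < n \<Longrightarrow> is_walk Est (pth xs par j) \<and> hd (pth xs par j) = xs!j \<and> last (pth xs par j) = xs!0
     \<and> length (pth xs par j) = Suc (dep par j)"
proof (induction j rule: less_induct)
  case (less j)
  show ?case
  proof (cases "j = 0")
    case True
    then show ?thesis by (simp add: pth.simps is_walk_def)
  next
    case False
    then have j1: "1 \<le> j" by simp
    have pj: "par j < j" using par_props[OF j1 less.prems] by simp
    have eq: "pth xs par j = xs!j # pth xs par (par j)" using pj by (subst pth.simps) simp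
    have IH: "is_walk Est (pth xs par (par j)) \<and> hd (pth xs par (par j)) = xs!(par j) \<and>
        last (pth xs par (par j)) = xs!0 \<and> length (pth xs par (par j)) = Suc (dep par (par j))"
      using less.IH[OF pj] pj less.prems by simp
    have e: "{xs!j, hd (pth xs par (par j))} \<in> Est" using IH edge_in[OF j1 less.prems]
      by (simp add: insert_commute)
    have w: "is_walk Est (pth xs par j)" unfolding eq by (rule walk_Cons) (use IH e in auto)
    have "pth xs par (par j) \<noteq> []" using IH by (auto simp: is_walk_def)
    then show ?thesis using w IH unfolding eq by (simp add: dep_step[OF j1 less.prems])
  qed
qed

lemma walk_lower:
  "is_walk Est ps \<Longrightarrow> j < n \<Longrightarrow> hd ps = xs!j \<Longrightarrow> last ps = xs!0 \<Longrightarrow> dep par j \<le> length ps - 1"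
proof (induction ps arbitrary: j)
  case Nil then show ?case by (simp add: is_walk_def)
next
  case (Cons x ps)
  show ?case
  proof (cases "ps = []")
    case True
    then have "xs!j = xs!0" using Cons.prems by simp
    moreover have "0 < n" using kn by linarith
    ultimately have "j = 0" using nth_inj[OF Cons.prems(2) \<open>0 < n\<close>] by simp
    then show ?thesis by simp
  next
    case False
    have wps: "is_walk Est ps" using Cons.prems(1) False unfolding is_walk_def
      by (metis Suc_less_eq length_Cons nth_Cons_Suc)
    have e: "{xs!j, hd ps} \<in> Est" using Cons.prems(1,3) False unfolding is_walk_def
      by (metis hd_conv_nth length_Cons length_greater_0_conv nth_Cons_0 nth_Cons_Suc Suc_less_eq list.sel(1))
    then have "hd ps \<in> set xs" using edge_mem by blast
    then obtain b where b: "b < n" "hd ps = xs!b" by (auto simp: in_set_conv_nth)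
    have IH: "dep par b \<le> length ps - 1" using Cons.IH[OF wps b(1) b(2)] Cons.prems(4) False by simp
    have "(1 \<le> j \<and> b = par j) \<or> (1 \<le> b \<and> j = par b)" using e b edge_iff[OF Cons.prems(2) b(1)] by auto
    then have "dep par j \<le> Suc (dep par b)"
      using dep_step[OF _ Cons.prems(2)] dep_step[OF _ b(1)] by auto
    then show ?thesis using IH False by (cases ps) auto
  qed
qed

lemma gdist_Est: "j < n \<Longrightarrow> gdist Est (xs!j) (xs!0) = dep par j"
  unfolding gdist_def
proof (rule Least_equality)
  assume j: "j < n"
  show "\<exists>ps. is_walk Est ps \<and> length ps = Suc (dep par j) \<and> hd ps = xs!j \<and> last ps = xs!0"
    using pth_props[OF j] by blast
  fix m assume "\<exists>ps. is_walk Est ps \<and> length ps = Suc m \<and> hd ps = xs!j \<and> last ps = xs!0"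
  then show "dep par j \<le> m" using walk_lower j by fastforce
qed

lemma connected: "connected_graph (set xs) Est"
  unfolding connected_graph_def
proof (intro ballI)
  fix v w assume "v \<in> set xs" "w \<in> set xs"
  then obtain a b where ab: "a < n" "v = xs!a" "b < n" "w = xs!b" by (auto simp: in_set_conv_nth)
  let ?p = "pth xs par a" and ?q = "rev (pth xs par b)"
  have p: "is_walk Est ?p" "hd ?p = v" "last ?p = xs!0" using pth_props[OF ab(1)] ab by auto
  have q: "is_walk Est ?q" "hd ?q = xs!0" "last ?q = w" using pth_props[OF ab(3)] ab walk_rev
    by (auto simp: hd_rev last_rev)
  have w: "is_walk Est (?p @ tl ?q)" using walk_app[OF p(1) q(1)] p q by simp
  have "?p \<noteq> []" "?q \<noteq> []" using p q by (auto simp: is_walk_def)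
  moreover have "last (?p @ tl ?q) = w"
  proof (cases "tl ?q = []")
    case True
    then have "?q = [xs!0]" using q(2) \<open>?q \<noteq> []\<close> by (cases ?q) auto
    then show ?thesis using True p q by simp
  next
    case False
    then show ?thesis using q(3) \<open>?q \<noteq> []\<close> by (simp add: last_tl)
  qed
  ultimately show "\<exists>ps. is_walk Est ps \<and> hd ps = v \<and> last ps = w" using w p(2) by auto
qed

lemma dep_mono: "i \<le> j \<Longrightarrow> j < n \<Longrightarrow> dep par i \<le> dep par j"
proof (induction j arbitrary: i rule: less_induct)
  case (less j)
  show ?case
  proof (cases "i = 0")
    case True then show ?thesis by simp
  next
    case False
    then have i1: "1 \<le> i" "1 \<le> j" using less.prems by auto
    have "par i \<le> par j" using par_mono less.prems by simp
    moreover have "par j < j" using par_props[OF i1(2) less.prems(2)] by simp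
    ultimately have "dep par (par i) \<le> dep par (par j)" using less.IH less.prems by simp
    then show ?thesis using dep_step[OF i1(1)] dep_step[OF i1(2) less.prems(2)] less.prems by simp
  qed
qed

lemma acyclic: "\<not> (\<exists>cs. set cs \<subseteq> set xs \<and> is_cycle Est cs)"
proof
  assume "\<exists>cs. set cs \<subseteq> set xs \<and> is_cycle Est cs"
  then obtain cs where cyc: "is_cycle Est cs" by blast
  define L where "L = length cs"
  have L3: "3 \<le> L" and dcs: "distinct cs" and ce: "\<And>i. i < L \<Longrightarrow> {cs!i, cs!((i+1) mod L)} \<in> Est"
    using cyc unfolding is_cycle_def L_def by auto
  have memc: "cs!i \<in> set xs" if "i < L" for i
    using ce[OF that] edge_mem by blast
  have bnd: "\<forall>y. y < L \<longrightarrow> idx (cs!y) < n" using idx_mem memc by blast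
  obtain q where q: "q < L" and qmax: "\<And>q'. q' < L \<Longrightarrow> idx (cs!q') \<le> idx (cs!q)"
    using ex_has_greatest_nat[of "\<lambda>q. q < L" 0 "\<lambda>q. idx (cs!q)" n, OF _ bnd] L3 by auto
  define nx where "nx = (q + 1) mod L"
  define pv where "pv = (if q = 0 then L - 1 else q - 1)"
  have nxL: "nx < L" using L3 unfolding nx_def by simp
  have pvL: "pv < L" using q L3 unfolding pv_def by auto
  have pvnx: "(pv + 1) mod L = q" using q L3 unfolding pv_def by auto
  have e1: "{cs!q, cs!nx} \<in> Est" using ce[OF q] unfolding nx_def .
  have e2: "{cs!q, cs!pv} \<in> Est" using ce[OF pvL] unfolding pvnx by (simp add: insert_commute)
  have nxq: "nx \<noteq> q" using L3 q unfolding nx_def by (cases "q + 1 = L") auto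
  have pvq: "pv \<noteq> q" using L3 q unfolding pv_def by auto
  have pvnx2: "pv \<noteq> nx" using L3 q unfolding pv_def nx_def by (cases "q + 1 = L") auto
  define m where "m = idx (cs!q)"
  have m: "m < n" "xs!m = cs!q" using idx_mem[OF memc[OF q]] unfolding m_def by auto
  have toparent: "idx (cs!r) = par m" if r: "r < L" "r \<noteq> q" "{cs!q, cs!r} \<in> Est" for r
  proof -
    define b where "b = idx (cs!r)"
    have b: "b < n" "xs!b = cs!r" using idx_mem[OF memc[OF r(1)]] unfolding b_def by auto
    have "b \<le> m" using qmax[OF r(1)] unfolding b_def m_def .
    moreover have "b \<noteq> m" using m b r(1,2) q dcs L_def nth_eq_iff_index_eq by metis
    ultimately have bm: "b < m" by simp
    have "(1 \<le> b \<and> m = par b) \<or> (1 \<le> m \<and> b = par m)"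
      using edge_iff[OF m(1) b(1)] r(3) m(2) b(2) by simp
    moreover have "\<not> (1 \<le> b \<and> m = par b)" using par_props[of b] b(1) bm by auto
    ultimately show ?thesis unfolding b_def by blast
  qed
  have "idx (cs!nx) = idx (cs!pv)" using toparent[OF nxL nxq e1] toparent[OF pvL pvq e2] by simp
  then have "cs!nx = cs!pv" using idx_mem[OF memc[OF nxL]] idx_mem[OF memc[OF pvL]] by metis
  then show False using pvnx2 dcs nxL pvL unfolding L_def by (simp add: nth_eq_iff_index_eq)
qed

lemma is_tree_Est: "is_tree (set xs) Est"
  unfolding is_tree_def using simple connected acyclic kn by auto

lemma boundary_Est: "boundary (set xs) Est = set (drop k xs)"
proof -
  have "v \<in> boundary (set xs) Est \<longleftrightarrow> v \<in> set (drop k xs)" for v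
  proof
    assume "v \<in> boundary (set xs) Est"
    then obtain i where i: "i < n" "v = xs!i" "deg Est v = 1" unfolding boundary_def by (auto simp: in_set_conv_nth)
    have "k \<le> i" using deg_int[of i] D2[of i] i by (cases "i < k") auto
    then show "v \<in> set (drop k xs)" using i by (auto simp: in_set_conv_nth intro: exI[of _ "i - k"])
  next
    assume "v \<in> set (drop k xs)"
    then obtain i where i: "k \<le> i" "i < n" "v = xs!i" by (auto simp: in_set_conv_nth) (metis add.commute le_add1 less_diff_conv)
    then show "v \<in> boundary (set xs) Est" unfolding boundary_def using deg_leaf by auto
  qed
  then show ?thesis by blast
qed

lemma interior_Est: "Defs.interior (set xs) Est = set (take k xs)"
proof -
  have "v \<in> Defs.interior (set xs) Est \<longleftrightarrow> v \<in> set (take k xs)" for v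
  proof
    assume "v \<in> Defs.interior (set xs) Est"
    then obtain i where i: "i < n" "v = xs!i" "deg Est v \<ge> 2" unfolding Defs.interior_def by (auto simp: in_set_conv_nth)
    have "i < k" using deg_leaf[of i] i by (cases "k \<le> i") auto
    then show "v \<in> set (take k xs)" using i by (auto simp: in_set_conv_nth)
  next
    assume "v \<in> set (take k xs)"
    then obtain i where i: "i < k" "v = xs!i" using kn by (auto simp: in_set_conv_nth)
    then show "v \<in> Defs.interior (set xs) Est" unfolding Defs.interior_def using deg_int D2 kn by auto
  qed
  then show ?thesis by blast
qed

lemma twb_Est: "tree_with_boundary (set xs) Est"
proof -
  have "set xs = set (take k xs) \<union> set (drop k xs)" by (metis append_take_drop_id set_append)
  moreover have "set (drop k xs) \<noteq> {}" using kn by simp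
  moreover have "set (take k xs) \<noteq> {}" using kn kpos by (cases xs) auto
  ultimately show ?thesis unfolding tree_with_boundary_def
    using is_tree_Est boundary_Est interior_Est by (simp add: Un_commute)
qed

lemma child_Est:
  assumes "i < n" "is_child Est (xs!0) (xs!i) c"
  shows "\<exists>j. j < n \<and> c = xs!j \<and> 1 \<le> j \<and> par j = i"
proof -
  have e: "{xs!i, c} \<in> Est" and g: "gdist Est c (xs!0) = gdist Est (xs!i) (xs!0) + 1"
    using assms(2) unfolding is_child_def by auto
  then have "c \<in> set xs" using edge_mem by blast
  then obtain j where j: "j < n" "c = xs!j" by (auto simp: in_set_conv_nth)
  have g2: "dep par j = dep par i + 1" using g gdist_Est j assms(1) by simp
  have "(1 \<le> j \<and> i = par j) \<or> (1 \<le> i \<and> j = par i)" using edge_iff[OF assms(1) j(1)] e j by simp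
  moreover have "\<not> (1 \<le> i \<and> j = par i)" using dep_step[OF _ assms(1)] g2 by auto
  ultimately show ?thesis using j by auto
qed

lemma prec_nth: "prec xs v w \<longleftrightarrow> (\<exists>i j. i < j \<and> j < n \<and> v = xs!i \<and> w = xs!j)"
  unfolding prec_def by auto

lemma SLO_Est: "SLO_star_ordering (set xs) Est (xs!0) xs"
  unfolding SLO_star_ordering_def SLO_ordering_def
proof (intro conjI allI impI)
  show "distinct xs" by (rule dist)
  show "set xs = set xs" ..
  fix v w assume "prec xs v w"
  then obtain i j where ij: "i < j" "j < n" "v = xs!i" "w = xs!j" unfolding prec_nth by blast
  show "gdist Est v (xs!0) \<le> gdist Est w (xs!0)" using ij gdist_Est dep_mono by simp
next
  fix v1 v2 c1 c2 assume a: "prec xs v1 v2 \<and> is_child Est (xs!0) v1 c1 \<and> is_child Est (xs!0) v2 c2"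
  then obtain i1 i2 where ii: "i1 < i2" "i2 < n" "v1 = xs!i1" "v2 = xs!i2" unfolding prec_nth by blast
  obtain j1 where j1: "j1 < n" "c1 = xs!j1" "1 \<le> j1" "par j1 = i1" using child_Est[of i1 c1] a ii by auto
  obtain j2 where j2: "j2 < n" "c2 = xs!j2" "1 \<le> j2" "par j2 = i2" using child_Est[of i2 c2] a ii by auto
  have "j1 < j2"
  proof (rule ccontr)
    assume "\<not> j1 < j2"
    then have "par j2 \<le> par j1" using par_mono j1(1) by simp
    then show False using ii j1 j2 by simp
  qed
  then show "prec xs c1 c2" unfolding prec_nth using j1 j2 by blast
next
  fix v w assume a: "prec xs v w \<and> v \<in> boundary (set xs) Est"
  then obtain i j where ij: "i < j" "j < n" "v = xs!i" "w = xs!j" unfolding prec_nth by blast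
  have "deg Est v = 1" using a unfolding boundary_def by auto
  then have "k \<le> i" using deg_int[of i] D2[of i] ij by (cases "i < k") auto
  then show "w \<in> boundary (set xs) Est" unfolding boundary_def using deg_leaf ij by auto
next
  fix v w assume a: "v \<in> Defs.interior (set xs) Est \<and> w \<in> Defs.interior (set xs) Est \<and> prec xs v w"
  then obtain i j where ij: "i < j" "j < n" "v = xs!i" "w = xs!j" unfolding prec_nth by blast
  have "j < k" using a ij deg_leaf[of j] unfolding Defs.interior_def by (cases "k \<le> j") auto
  then show "deg Est v \<le> deg Est w" using ij deg_int sortD lenD by (simp add: sorted_nth_mono)
qed

lemma SLO_tree_Est: "SLO_star_tree (set xs) Est"
proof -
  have "xs!0 \<in> set xs" using kn by (intro nth_mem) linarith
  then show ?thesis unfolding SLO_star_tree_def using twb_Est SLO_Est by blast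
qed

lemma degseq_Est: "degree_sequence (set xs) Est = mset D + replicate_mset (n - k) 1"
proof -
  have "degree_sequence (set xs) Est = mset (map (deg Est) xs)"
    unfolding degree_sequence_def using dist by (simp add: mset_set_set)
  also have "map (deg Est) xs = map (deg Est) (take k xs) @ map (deg Est) (drop k xs)"
    by (metis append_take_drop_id map_append)
  also have "map (deg Est) (take k xs) = D"
    by (rule nth_equalityI) (use lenD kn deg_int in auto)
  also have "map (deg Est) (drop k xs) = replicate (n - k) 1"
    by (rule nth_equalityI) (use kn deg_leaf in auto)
  finally show ?thesis by simp
qed

end

lemma take_insort_le:
  fixes S :: "nat list"
  assumes "sorted S" "1 \<le> t"
  shows "sum_list (take t (insort x S)) \<le> x + sum_list (take (t - 1) S)"
  using assms
proof (induction S arbitrary: t)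
  case Nil then show ?case by (cases t) auto
next
  case (Cons y S)
  show ?case
  proof (cases "x \<le> y")
    case True
    then show ?thesis using Cons.prems by (cases t) auto
  next
    case False
    then have ins: "insort x (y # S) = y # insort x S" by simp
    obtain t' where t': "t = Suc t'" using Cons.prems by (cases t) auto
    show ?thesis
    proof (cases t')
      case 0
      then show ?thesis using t' False ins by simp
    next
      case (Suc t'')
      have "sum_list (take t' (insort x S)) \<le> x + sum_list (take (t' - 1) S)"
        using Cons.IH[of t'] Cons.prems Suc by simp
      then show ?thesis using ins t' Suc by simp
    qed
  qed
qed

lemma take_sort_le:
  fixes L :: "nat list"
  shows "sum_list (take t (sort L)) \<le> sum_list (take t L)"
proof (induction L arbitrary: t)
  case Nil then show ?case by simp
next
  case (Cons x L)
  show ?case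
  proof (cases t)
    case 0 then show ?thesis by simp
  next
    case (Suc t')
    have "sum_list (take t (sort (x # L))) = sum_list (take t (insort x (sort L)))" by simp
    also have "\<dots> \<le> x + sum_list (take t' (sort L))" using take_insort_le[of "sort L" t x] Suc by simp
    also have "\<dots> \<le> x + sum_list (take t' L)" using Cons.IH by simp
    finally show ?thesis using Suc by simp
  qed
qed

definition AP :: "'a set set \<Rightarrow> 'a set \<Rightarrow> ('a \<times> 'a) set" where
  "AP E V = {(u,w). u \<in> V \<and> w \<in> V \<and> {u,w} \<in> E}"

lemma AP_finite: "finite V \<Longrightarrow> finite (AP E V)"
  unfolding AP_def by (rule finite_subset[of _ "V \<times> V"]) auto

lemma AP_swap: "(\<Sum>p\<in>AP E V. f (snd p) (fst p)) = (\<Sum>p\<in>AP E V. f (fst p) (snd p))"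
proof -
  let ?h = "\<lambda>p. (snd p, fst p)"
  have eq: "AP E V = ?h ` AP E V" unfolding AP_def by (auto simp: insert_commute image_iff)
  have inj: "inj_on ?h (AP E V)" by (auto simp: inj_on_def)
  have "(\<Sum>p\<in>AP E V. f (fst p) (snd p)) = (\<Sum>p\<in>?h ` AP E V. f (fst p) (snd p))"
    by (rule arg_cong[where f="sum (\<lambda>p. f (fst p) (snd p))"]) (rule eq)
  also have "\<dots> = (\<Sum>p\<in>AP E V. f (snd p) (fst p))"
    by (subst sum.reindex[OF inj]) simp
  finally have "(\<Sum>p\<in>AP E V. f (fst p) (snd p)) = (\<Sum>p\<in>AP E V. f (snd p) (fst p))" .
  then show ?thesis by simp
qed

lemma AP_sum: "finite V \<Longrightarrow> (\<Sum>p\<in>AP E V. f (fst p) (snd p)) = (\<Sum>v\<in>V. \<Sum>w\<in>{w\<in>V. {v,w}\<in>E}. f v w)"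
proof -
  assume fV: "finite V"
  have "AP E V = Sigma V (\<lambda>v. {w\<in>V. {v,w}\<in>E})" unfolding AP_def by auto
  then show ?thesis using fV by (simp add: sum.Sigma split_def)
qed

lemma bf_pairs:
  assumes s: "simple_graph V E" and x0: "\<And>v. v \<notin> Defs.interior V E \<Longrightarrow> x v = 0"
  shows "2 * bf V E x x = (\<Sum>p\<in>AP E V. (x (fst p) - x (snd p))^2)"
proof -
  let ?I = "Defs.interior V E"
  let ?N = "\<lambda>v. {w\<in>V. {v,w}\<in>E}"
  have fV: "finite V" using s by (rule simple_finite)
  have IV: "?I \<subseteq> V" unfolding Defs.interior_def by auto
  have inner: "(\<Sum>w\<in>{w\<in>?I. {v,w}\<in>E}. x w) = (\<Sum>w\<in>?N v. x w)" for v
    by (rule sum.mono_neutral_left) (use fV IV x0 in auto)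
  have "bf V E x x = (\<Sum>v\<in>?I. x v * (real (deg E v) * x v - (\<Sum>w\<in>?N v. x w)))"
    unfolding bf_def dirichlet_op_def inner ..
  also have "\<dots> = (\<Sum>v\<in>V. x v * (real (deg E v) * x v - (\<Sum>w\<in>?N v. x w)))"
    by (rule sum.mono_neutral_left) (use fV IV x0 in auto)
  also have "\<dots> = (\<Sum>v\<in>V. \<Sum>w\<in>?N v. (x v * x v - x v * x w))"
  proof (rule sum.cong[OF refl])
    fix v assume "v \<in> V"
    have "deg E v = card (?N v)" by (rule deg_V[OF s])
    then show "x v * (real (deg E v) * x v - (\<Sum>w\<in>?N v. x w)) = (\<Sum>w\<in>?N v. (x v * x v - x v * x w))"
      by (simp add: sum_subtractf sum_distrib_left algebra_simps)
  qed
  also have "\<dots> = (\<Sum>p\<in>AP E V. (x (fst p) * x (fst p) - x (fst p) * x (snd p)))"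
    using AP_sum[OF fV, where E=E and f="\<lambda>a b. x a * x a - x a * x b"] by simp
  finally have b: "bf V E x x = (\<Sum>p\<in>AP E V. (x (fst p) * x (fst p) - x (fst p) * x (snd p)))" .
  have "(\<Sum>p\<in>AP E V. (x (fst p) - x (snd p))^2) =
      (\<Sum>p\<in>AP E V. (x (fst p) * x (fst p) - x (fst p) * x (snd p))) + (\<Sum>p\<in>AP E V. (x (snd p) * x (snd p) - x (snd p) * x (fst p)))"
    by (simp add: sum.distrib[symmetric] power2_eq_square algebra_simps)
  also have "(\<Sum>p\<in>AP E V. (x (snd p) * x (snd p) - x (snd p) * x (fst p))) = (\<Sum>p\<in>AP E V. (x (fst p) * x (fst p) - x (fst p) * x (snd p)))"
    using AP_swap[where E=E and V=V and f="\<lambda>a b. x a * x a - x a * x b"] by simp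
  finally show ?thesis using b by simp
qed

definition av :: "'a list \<Rightarrow> ('a \<Rightarrow> real) \<Rightarrow> nat \<Rightarrow> real" where
  "av ws g t = (if t < length ws then g (ws!t) else 0)"
definition dl :: "'a list \<Rightarrow> ('a \<Rightarrow> real) \<Rightarrow> nat \<Rightarrow> real" where
  "dl ws g t = av ws g (t - 1) - av ws g t"
definition XX :: "'a list \<Rightarrow> nat \<Rightarrow> 'a set" where
  "XX ws t = set (take t ws)"
definition ind :: "bool \<Rightarrow> real" where
  "ind P = (if P then 1 else 0)"
definition al :: "'a list \<Rightarrow> 'a \<Rightarrow> 'a \<Rightarrow> nat \<Rightarrow> real" where
  "al ws u w t = ind (u \<in> XX ws t \<and> w \<notin> XX ws t)"
definition Ncnt :: "'a set set \<Rightarrow> 'a set \<Rightarrow> 'a list \<Rightarrow> nat \<Rightarrow> nat \<Rightarrow> nat" where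
  "Ncnt E V ws t s = card {p \<in> AP E V. fst p \<in> XX ws t \<and> snd p \<notin> XX ws t \<and> fst p \<in> XX ws s \<and> snd p \<notin> XX ws s}"

lemma tele: "r \<le> K \<Longrightarrow> (\<Sum>t\<in>{Suc r..K}. (f (t - 1) - f t)) = f r - (f K :: real)"
proof (induction K)
  case 0 then show ?case by simp
next
  case (Suc K)
  show ?case
  proof (cases "r = Suc K")
    case True then show ?thesis by simp
  next
    case False
    then have "r \<le> K" using Suc.prems by simp
    then have "{Suc r..Suc K} = insert (Suc K) {Suc r..K}" by auto
    then show ?thesis using Suc.IH \<open>r \<le> K\<close> by simp
  qed
qed

lemma XX_nested: "XX ws t \<subseteq> XX ws s \<or> XX ws s \<subseteq> XX ws t"
  unfolding XX_def by (metis nat_le_linear set_take_subset_set_take)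

lemma XX_nth: "distinct ws \<Longrightarrow> r < length ws \<Longrightarrow> ws!r \<in> XX ws t \<longleftrightarrow> r < t"
  unfolding XX_def
proof -
  assume d: "distinct ws" and r: "r < length ws"
  show "ws!r \<in> set (take t ws) \<longleftrightarrow> r < t"
  proof
    assume "ws!r \<in> set (take t ws)"
    then obtain i where i: "i < length (take t ws)" "take t ws ! i = ws!r" by (auto simp: in_set_conv_nth)
    then have "ws!i = ws!r" "i < t" "i < length ws" by auto
    then show "r < t" using d r by (simp add: nth_eq_iff_index_eq)
  next
    assume "r < t"
    then show "ws!r \<in> set (take t ws)" using r by (auto simp: in_set_conv_nth intro!: exI[of _ r])
  qed
qed

context
  fixes ws :: "'a list" and g :: "'a \<Rightarrow> real"
  assumes dws: "distinct ws" and g0: "\<And>v. v \<notin> set ws \<Longrightarrow> g v = 0"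
    and gmono: "\<And>i j. i \<le> j \<Longrightarrow> j < length ws \<Longrightarrow> g (ws!j) \<le> g (ws!i)"
    and gnn: "\<And>v. g v \<ge> 0"
begin

lemma dl_nonneg: "t \<in> {1..length ws} \<Longrightarrow> dl ws g t \<ge> 0"
  unfolding dl_def av_def using gmono gnn by auto

lemma g_layer: "g v = (\<Sum>t\<in>{1..length ws}. dl ws g t * ind (v \<in> XX ws t))"
proof (cases "v \<in> set ws")
  case False
  then have "v \<notin> XX ws t" for t unfolding XX_def using set_take_subset by fastforce
  then show ?thesis using g0[OF False] by (simp add: ind_def)
next
  case True
  then obtain r where r: "r < length ws" "v = ws!r" by (auto simp: in_set_conv_nth)
  have "(\<Sum>t\<in>{1..length ws}. dl ws g t * ind (v \<in> XX ws t)) = (\<Sum>t\<in>{1..length ws}. if r < t then dl ws g t else 0)"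
    using XX_nth[OF dws r(1)] r(2) by (intro sum.cong) (auto simp: ind_def)
  also have "\<dots> = (\<Sum>t\<in>{t\<in>{1..length ws}. r < t}. dl ws g t)" by (rule sum.inter_filter[symmetric]) simp
  also have "{t\<in>{1..length ws}. r < t} = {Suc r..length ws}" by auto
  also have "(\<Sum>t\<in>{Suc r..length ws}. dl ws g t) = av ws g r - av ws g (length ws)"
    unfolding dl_def using r(1) by (intro tele) simp
  also have "\<dots> = g v" using r unfolding av_def by simp
  finally show ?thesis by simp
qed

lemma al_cross: "al ws u w t * al ws w u s = 0"
  unfolding al_def ind_def using XX_nested[of ws t s] by auto

lemma sq_layer:
  "(g u - g w)^2 = (\<Sum>t\<in>{1..length ws}. \<Sum>s\<in>{1..length ws}.
      dl ws g t * dl ws g s * (al ws u w t * al ws u w s + al ws w u t * al ws w u s))"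
proof -
  let ?T = "{1..length ws}"
  let ?c = "\<lambda>t. dl ws g t * (al ws u w t - al ws w u t)"
  have "g u - g w = (\<Sum>t\<in>?T. dl ws g t * ind (u \<in> XX ws t) - dl ws g t * ind (w \<in> XX ws t))"
    by (subst g_layer[of u], subst g_layer[of w]) (simp add: sum_subtractf)
  also have "\<dots> = (\<Sum>t\<in>?T. ?c t)"
    by (intro sum.cong refl) (auto simp: al_def ind_def algebra_simps)
  finally have "g u - g w = (\<Sum>t\<in>?T. ?c t)" .
  then have "(g u - g w)^2 = (\<Sum>t\<in>?T. \<Sum>s\<in>?T. ?c t * ?c s)"
    by (simp add: power2_eq_square sum_product)
  also have "\<dots> = (\<Sum>t\<in>?T. \<Sum>s\<in>?T. dl ws g t * dl ws g s * (al ws u w t * al ws u w s + al ws w u t * al ws w u s))"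
  proof (intro sum.cong refl)
    fix t s
    have "?c t * ?c s = dl ws g t * dl ws g s * (al ws u w t * al ws u w s + al ws w u t * al ws w u s
         - al ws u w t * al ws w u s - al ws w u t * al ws u w s)"
      by (simp add: algebra_simps)
    then show "?c t * ?c s = dl ws g t * dl ws g s * (al ws u w t * al ws u w s + al ws w u t * al ws w u s)"
      using al_cross[of u w t s] al_cross[of w u t s] by simp
  qed
  finally show ?thesis .
qed

lemma sum_layer:
  assumes fV: "finite V"
  shows "(\<Sum>p\<in>AP E V. (g (fst p) - g (snd p))^2) =
    2 * (\<Sum>t\<in>{1..length ws}. \<Sum>s\<in>{1..length ws}. dl ws g t * dl ws g s * real (Ncnt E V ws t s))"
proof -
  let ?T = "{1..length ws}"
  let ?A = "AP E V"
  have fA: "finite ?A" using AP_finite[OF fV] .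
  have "(\<Sum>p\<in>?A. (g (fst p) - g (snd p))^2) = (\<Sum>p\<in>?A. \<Sum>t\<in>?T. \<Sum>s\<in>?T.
      dl ws g t * dl ws g s * (al ws (fst p) (snd p) t * al ws (fst p) (snd p) s + al ws (snd p) (fst p) t * al ws (snd p) (fst p) s))"
    by (intro sum.cong refl) (rule sq_layer)
  also have "\<dots> = (\<Sum>t\<in>?T. \<Sum>s\<in>?T. \<Sum>p\<in>?A.
      dl ws g t * dl ws g s * (al ws (fst p) (snd p) t * al ws (fst p) (snd p) s + al ws (snd p) (fst p) t * al ws (snd p) (fst p) s))"
    by (subst sum.swap) (intro sum.cong refl, rule sum.swap)
  also have "\<dots> = (\<Sum>t\<in>?T. \<Sum>s\<in>?T. dl ws g t * dl ws g s * (2 * real (Ncnt E V ws t s)))"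
  proof (intro sum.cong refl)
    fix t s
    have c: "(\<Sum>p\<in>?A. al ws (fst p) (snd p) t * al ws (fst p) (snd p) s) = real (Ncnt E V ws t s)"
    proof -
      have "(\<Sum>p\<in>?A. al ws (fst p) (snd p) t * al ws (fst p) (snd p) s) =
          (\<Sum>p\<in>?A. if fst p \<in> XX ws t \<and> snd p \<notin> XX ws t \<and> fst p \<in> XX ws s \<and> snd p \<notin> XX ws s then 1 else 0)"
        by (intro sum.cong refl) (simp add: al_def ind_def)
      also have "\<dots> = real (Ncnt E V ws t s)" unfolding Ncnt_def
        by (simp add: sum.If_cases[OF fA] Int_def conj_commute)
      finally show ?thesis .
    qed
    have c2: "(\<Sum>p\<in>?A. al ws (snd p) (fst p) t * al ws (snd p) (fst p) s) = (\<Sum>p\<in>?A. al ws (fst p) (snd p) t * al ws (fst p) (snd p) s)"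
      using AP_swap[where E=E and V=V and f="\<lambda>a b. al ws b a t * al ws b a s"] by simp
    show "(\<Sum>p\<in>?A. dl ws g t * dl ws g s * (al ws (fst p) (snd p) t * al ws (fst p) (snd p) s + al ws (snd p) (fst p) t * al ws (snd p) (fst p) s))
        = dl ws g t * dl ws g s * (2 * real (Ncnt E V ws t s))"
      using c c2 by (simp add: sum_distrib_left[symmetric] sum.distrib)
  qed
  also have "\<dots> = 2 * (\<Sum>t\<in>?T. \<Sum>s\<in>?T. dl ws g t * dl ws g s * real (Ncnt E V ws t s))"
    by (simp add: sum_distrib_left algebra_simps)
  finally show ?thesis .
qed

lemma layer_compare:
  assumes fV: "finite V"
    and le: "\<And>t s. t \<in> {1..length ws} \<Longrightarrow> s \<in> {1..length ws} \<Longrightarrow> Ncnt E1 V ws t s \<le> Ncnt E2 V ws t s"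
  shows "(\<Sum>p\<in>AP E1 V. (g (fst p) - g (snd p))^2) \<le> (\<Sum>p\<in>AP E2 V. (g (fst p) - g (snd p))^2)"
  unfolding sum_layer[OF fV]
proof -
  have "(\<Sum>t\<in>{1..length ws}. \<Sum>s\<in>{1..length ws}. dl ws g t * dl ws g s * real (Ncnt E1 V ws t s))
      \<le> (\<Sum>t\<in>{1..length ws}. \<Sum>s\<in>{1..length ws}. dl ws g t * dl ws g s * real (Ncnt E2 V ws t s))"
    using le dl_nonneg by (intro sum_mono mult_left_mono) auto
  then show "2 * (\<Sum>t\<in>{1..length ws}. \<Sum>s\<in>{1..length ws}. dl ws g t * dl ws g s * real (Ncnt E1 V ws t s))
      \<le> 2 * (\<Sum>t\<in>{1..length ws}. \<Sum>s\<in>{1..length ws}. dl ws g t * dl ws g s * real (Ncnt E2 V ws t s))"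
    by simp
qed

end

lemma T_count:
  assumes tr: "is_tree V E" and d: "distinct ws" and sub: "set ws \<subseteq> V"
    and ts: "1 \<le> t" "t \<le> s" "s \<le> length ws"
  shows "(\<Sum>v\<in>XX ws t. deg E v) \<le> pc E (XX ws t) (V - XX ws s) + (t - 1) + (s - 1)"
proof -
  let ?X = "XX ws t" and ?Y = "XX ws s"
  have s: "simple_graph V E" and nc: "\<not> (\<exists>cs. set cs \<subseteq> V \<and> is_cycle E cs)"
    using tr unfolding is_tree_def by auto
  have fV: "finite V" using s by (rule simple_finite)
  have XY: "?X \<subseteq> ?Y" unfolding XX_def using ts by (simp add: set_take_subset_set_take)
  have YV: "?Y \<subseteq> V" unfolding XX_def using sub set_take_subset by fastforce
  have XV: "?X \<subseteq> V" using XY YV by simp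
  have cX: "card ?X = t" unfolding XX_def using d ts by (simp add: distinct_card)
  have cY: "card ?Y = s" unfolding XX_def using d ts by (simp add: distinct_card)
  have fX: "finite ?X" "finite ?Y" unfolding XX_def by simp_all
  have neX: "?X \<noteq> {}" using cX ts by auto
  have neY: "?Y \<noteq> {}" using cY ts by auto
  have nl: "\<forall>v. {v,v} \<notin> E" using simple_noloop[OF s] by blast
  have ncX: "\<not> (\<exists>cs. set cs \<subseteq> ?X \<and> is_cycle E cs)" using nc XV by (meson subset_trans)
  have ncY: "\<not> (\<exists>cs. set cs \<subseteq> ?Y \<and> is_cycle E cs)" using nc YV by (meson subset_trans)
  have fbX: "pc E ?X ?X + 2 \<le> 2 * t" using forest_bound[OF fX(1) neX nl ncX] cX by simp
  have fbY: "pc E ?Y ?Y + 2 \<le> 2 * s" using forest_bound[OF fX(2) neY nl ncY] cY by simp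
  have Ysplit: "?Y = ?X \<union> (?Y - ?X)" using XY by auto
  have fD: "finite (?Y - ?X)" using fX by simp
  have pXY: "pc E ?X ?Y = pc E ?X ?X + pc E ?X (?Y - ?X)"
    by (subst Ysplit, rule pc_union2) (use fX fD in auto)
  have pYY: "pc E ?Y ?Y = pc E ?X ?X + pc E ?X (?Y - ?X) + (pc E (?Y - ?X) ?X + pc E (?Y - ?X) (?Y - ?X))"
  proof -
    have "pc E ?Y ?Y = pc E ?X ?Y + pc E (?Y - ?X) ?Y"
      by (subst (1) Ysplit, rule pc_union1) (use fX fD in auto)
    also have "pc E (?Y - ?X) ?Y = pc E (?Y - ?X) ?X + pc E (?Y - ?X) (?Y - ?X)"
      by (subst Ysplit, rule pc_union2) (use fX fD in auto)
    finally show ?thesis using pXY by simp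
  qed
  have "pc E (?Y - ?X) ?X = pc E ?X (?Y - ?X)" by (rule pc_sym)
  then have "2 * pc E ?X ?Y \<le> pc E ?X ?X + pc E ?Y ?Y" using pXY pYY by simp
  then have bXY: "pc E ?X ?Y \<le> (t - 1) + (s - 1)" using fbX fbY ts by simp
  have Vsplit: "V = ?Y \<union> (V - ?Y)" using YV by auto
  have "(\<Sum>v\<in>?X. deg E v) = pc E ?X V" by (rule sum_deg[OF s XV])
  also have "\<dots> = pc E ?X ?Y + pc E ?X (V - ?Y)"
    by (subst Vsplit, rule pc_union2) (use fX fV in auto)
  finally show ?thesis using bXY by simp
qed

lemma Ncnt_sym: "Ncnt E V ws t s = Ncnt E V ws s t"
  unfolding Ncnt_def by (rule arg_cong[where f=card]) auto

lemma Ncnt_pc: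
  assumes "t \<le> s" "XX ws s \<subseteq> V"
  shows "Ncnt E V ws t s = pc E (XX ws t) (V - XX ws s)"
proof -
  have XY: "XX ws t \<subseteq> XX ws s" unfolding XX_def using assms by (simp add: set_take_subset_set_take)
  show ?thesis unfolding Ncnt_def pc_def AP_def
    by (rule arg_cong[where f=card]) (use XY assms(2) in auto)
qed

context slo
begin

lemma G_count:
  assumes ts: "1 \<le> t" "t \<le> s" "s \<le> k"
  shows "pc Est (XX xs t) (set xs - XX xs s) \<le> Suc (cum t) - s"
proof -
  let ?S = "{(u,w). u \<in> XX xs t \<and> w \<in> set xs - XX xs s \<and> {u,w} \<in> Est}"
  have "?S \<subseteq> (\<lambda>j. (xs!(par j), xs!j)) ` {s..cum t}"
  proof
    fix p assume "p \<in> ?S"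
    then obtain u w where p: "p = (u,w)" "u \<in> XX xs t" "w \<in> set xs" "w \<notin> XX xs s" "{u,w} \<in> Est" by blast
    obtain i where i: "i < t" "u = xs!i" using p(2) unfolding XX_def by (auto simp: in_set_conv_nth)
    have iN: "i < n" using i ts kn by simp
    obtain j where j: "j < n" "w = xs!j" using p(3) by (auto simp: in_set_conv_nth)
    have js: "\<not> j < s" using p(4) XX_nth[OF dist j(1)] j(2) by simp
    have "(1 \<le> j \<and> i = par j) \<or> (1 \<le> i \<and> j = par i)" using edge_iff[OF iN j(1)] p(5) i j by simp
    moreover have "\<not> (1 \<le> i \<and> j = par i)"
    proof
      assume "1 \<le> i \<and> j = par i"
      then have "j < i" using par_props[of i] iN by simp
      then show False using js i ts by simp
    qed
    ultimately have pj: "1 \<le> j" "par j = i" by auto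
    have "j \<le> cum (Suc (par j))" using par_props[OF pj(1) j(1)] by simp
    also have "\<dots> \<le> cum t" using pj(2) i by (intro cum_mono) simp
    finally have "j \<in> {s..cum t}" using js by simp
    then show "p \<in> (\<lambda>j. (xs!(par j), xs!j)) ` {s..cum t}" using p(1) i j pj by auto
  qed
  then have "card ?S \<le> card ((\<lambda>j. (xs!(par j), xs!j)) ` {s..cum t})" by (intro card_mono) auto
  also have "\<dots> \<le> card {s..cum t}" by (rule card_image_le) simp
  finally show ?thesis unfolding pc_def by simp
qed

end

lemma sum_take_nth: "t \<le> length D \<Longrightarrow> sum_list (take t D) = (\<Sum>i<t. D!i)"
  by (simp add: sum_list_sum_nth atLeast0LessThan min_def)

theorem lemma6:
  fixes V :: "'a set" and E :: "'a set set"
  assumes "tree_with_boundary V E"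
  shows "\<exists>E'. tree_with_boundary V E' \<and> degree_sequence V E' = degree_sequence V E \<and>
           SLO_star_tree V E' \<and> lambda_min V E' \<le> lambda_min V E"
proof -
  let ?I = "Defs.interior V E" and ?B = "boundary V E"
  have tr: "is_tree V E" and VBI: "V = ?B \<union> ?I" and neB: "?B \<noteq> {}" and neI: "?I \<noteq> {}"
    using assms unfolding tree_with_boundary_def by auto
  have s: "simple_graph V E" using tr unfolding is_tree_def by auto
  have fV: "finite V" using s by (rule simple_finite)
  have IV: "?I \<subseteq> V" and BV: "?B \<subseteq> V" unfolding Defs.interior_def boundary_def by auto
  have fI: "finite ?I" and fB: "finite ?B" using fV IV BV finite_subset by auto
  have dBI: "?B \<inter> ?I = {}" unfolding Defs.interior_def boundary_def by auto
  define lam where "lam = lambda_min V E"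
  have lchar: "lam \<in> dirichlet_eigenvalues V E" using lambda_min_char[OF fV neI] unfolding lam_def by blast
  then obtain f where fnz: "\<exists>v\<in>?I. f v \<noteq> 0" and feig: "\<forall>v\<in>?I. dirichlet_op V E f v = lam * f v"
    unfolding dirichlet_eigenvalues_def by blast
  define f' where "f' = (\<lambda>v. if v \<in> ?I then f v else 0)"
  define g where "g = (\<lambda>v. \<bar>f' v\<bar>)"
  have f'0: "\<And>v. v \<notin> ?I \<Longrightarrow> f' v = 0" unfolding f'_def by simp
  have g0: "\<And>v. v \<notin> ?I \<Longrightarrow> g v = 0" unfolding g_def f'_def by simp
  have gnn: "\<And>v. g v \<ge> 0" unfolding g_def by simp
  obtain L0 where L0: "set L0 = ?I" "distinct L0" using finite_distinct_list[OF fI] by blast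
  obtain ls where ls: "set ls = ?B" "distinct ls" using finite_distinct_list[OF fB] by blast
  define ws where "ws = sort_key (\<lambda>v. - g v) L0"
  have ws: "set ws = ?I" "distinct ws" unfolding ws_def using L0 by simp_all
  have wsmono: "g (ws!j) \<le> g (ws!i)" if "i \<le> j" "j < length ws" for i j
  proof -
    have "sorted (map (\<lambda>v. - g v) ws)" unfolding ws_def by (rule sorted_sort_key)
    then have "(map (\<lambda>v. - g v) ws)!i \<le> (map (\<lambda>v. - g v) ws)!j"
      using that by (intro sorted_nth_mono) auto
    then show ?thesis using that by simp
  qed
  define xs where "xs = ws @ ls"
  define k where "k = length ws"
  define D where "D = sort (map (deg E) ws)"
  have dxs: "distinct xs" unfolding xs_def using ws ls dBI by auto
  have sxs: "set xs = V"
  proof -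
    have "set xs = ?B \<union> ?I" unfolding xs_def using ws ls by auto
    then show ?thesis by (rule trans) (rule VBI[symmetric])
  qed
  have kI: "k = card ?I" unfolding k_def using ws distinct_card by metis
  have nV: "length xs = card V" using dxs sxs distinct_card by metis
  have lB: "length ls = card ?B" using ls distinct_card by metis
  have kpos: "1 \<le> k" using kI neI fI by (simp add: Suc_le_eq card_gt_0_iff)
  have lpos: "1 \<le> length ls" using lB neB fB by (simp add: Suc_le_eq card_gt_0_iff)
  have nk: "length xs = k + length ls" unfolding xs_def k_def by simp
  have degI: "2 \<le> deg E v" if "v \<in> ?I" for v using that unfolding Defs.interior_def by auto
  have degB: "deg E v = 1" if "v \<in> ?B" for v using that unfolding boundary_def by auto
  have sumV: "(\<Sum>v\<in>V. deg E v) = 2 * (card V - 1)" by (rule tree_degsum[OF tr])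
  have "(\<Sum>v\<in>V. deg E v) = (\<Sum>v\<in>?I. deg E v) + (\<Sum>v\<in>?B. deg E v)"
  proof -
    have "sum (deg E) V = sum (deg E) (?B \<union> ?I)" using arg_cong[OF VBI, of "sum (deg E)"] .
    also have "\<dots> = sum (deg E) ?B + sum (deg E) ?I" by (rule sum.union_disjoint) (use fI fB dBI in auto)
    finally show ?thesis by simp
  qed
  moreover have "(\<Sum>v\<in>?B. deg E v) = card ?B" using degB by simp
  moreover have "sum_list D = (\<Sum>v\<in>?I. deg E v)"
  proof -
    have "sum_list D = sum_list (map (deg E) ws)" unfolding D_def by (metis mset_sort sum_mset_sum_list)
    also have "\<dots> = (\<Sum>v\<in>set ws. deg E v)" using ws(2) by (rule sum_list_distinct_conv_sum_set)
    finally show ?thesis using ws(1) by simp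
  qed
  ultimately have sumD: "sum_list D + 2 = length xs + k"
    using sumV nV nk lB kpos by simp
  have lenD: "length D = k" unfolding D_def k_def by simp
  have D2: "2 \<le> D!i" if "i < k" for i
  proof -
    have "D!i \<in> set D" using that lenD by simp
    then have "D!i \<in> deg E ` set ws" unfolding D_def by simp
    then show ?thesis using degI ws by auto
  qed
  interpret S: slo xs D k
  proof
    show "distinct xs" by (rule dxs)
    show "1 \<le> k" by (rule kpos)
    show "k < length xs" using nk lpos by linarith
    show "length D = k" by (rule lenD)
    show "\<And>i. i < k \<Longrightarrow> 2 \<le> D!i" by (rule D2)
    show "sorted D" unfolding D_def by simp
    show "sum_list D + 2 = length xs + k" by (rule sumD)
  qed
  have twbG: "tree_with_boundary V S.Est" using S.twb_Est sxs by simp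
  have sloG: "SLO_star_tree V S.Est" using S.SLO_tree_Est sxs by simp
  have take_ws: "take k xs = ws" unfolding xs_def k_def by simp
  have intG: "Defs.interior V S.Est = ?I" using S.interior_Est sxs take_ws ws by simp
  have dsG: "degree_sequence V S.Est = degree_sequence V E"
  proof -
    have "degree_sequence V E = mset (map (deg E) xs)"
      unfolding degree_sequence_def using dxs sxs[symmetric] by (simp add: mset_set_set)
    also have "\<dots> = mset (map (deg E) ws) + mset (map (deg E) ls)" unfolding xs_def by simp
    also have "mset (map (deg E) ws) = mset D" unfolding D_def by simp
    also have "map (deg E) ls = replicate (length ls) 1"
    proof (rule nth_equalityI)
      fix i assume "i < length (map (deg E) ls)"
      then have "ls ! i \<in> ?B" using ls(1) by (metis length_map nth_mem)
      then show "map (deg E) ls ! i = replicate (length ls) 1 ! i" using degB \<open>i < length (map (deg E) ls)\<close> by simp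
    qed simp
    finally have "degree_sequence V E = mset D + replicate_mset (length xs - k) 1" using nk by simp
    then show ?thesis using S.degseq_Est sxs by simp
  qed
  have neIG: "Defs.interior V S.Est \<noteq> {}" using intG neI by simp
  have sG: "simple_graph V S.Est" using twbG unfolding tree_with_boundary_def is_tree_def by simp
  have gray: "lambda_min V S.Est * ipr V S.Est g g \<le> bf V S.Est g g"
    using lambda_min_char[OF fV neIG] by blast
  have ipr_eq: "ipr V S.Est g g = ipr V E f f"
    unfolding ipr_def intG g_def f'_def by (intro sum.cong refl) (simp add: abs_mult_self_eq)
  have fpos: "ipr V E f f > 0"
  proof -
    obtain v where v: "v \<in> ?I" "f v \<noteq> 0" using fnz by blast
    have "ipr V E f f \<noteq> 0" using ipr_zero[OF fV neI _ v(1)] v(2) by blast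
    then show ?thesis using ipr_nonneg[OF fV neI, of f] by simp
  qed
  have bfG: "2 * bf V S.Est g g = (\<Sum>p\<in>AP S.Est V. (g (fst p) - g (snd p))^2)"
    by (rule bf_pairs[OF sG]) (use g0 intG in auto)
  have bfT: "2 * bf V E f' f' = (\<Sum>p\<in>AP E V. (f' (fst p) - f' (snd p))^2)"
    by (rule bf_pairs[OF s]) (use f'0 in auto)
  have bff: "bf V E f' f' = bf V E f f" by (rule bf_restr[OF fV neI]) (auto simp: f'_def)
  have bfl: "bf V E f f = lam * ipr V E f f" by (rule eig_quot[OF fV neI feig])
  have absle: "(\<Sum>p\<in>AP E V. (g (fst p) - g (snd p))^2) \<le> (\<Sum>p\<in>AP E V. (f' (fst p) - f' (snd p))^2)"
  proof (rule sum_mono)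
    fix p
    have "\<bar>g (fst p) - g (snd p)\<bar> \<le> \<bar>f' (fst p) - f' (snd p)\<bar>" unfolding g_def by (rule abs_triangle_ineq3)
    then show "(g (fst p) - g (snd p))^2 \<le> (f' (fst p) - f' (snd p))^2"
      by (metis abs_ge_zero power2_abs power_mono)
  qed
  have g0ws: "\<And>v. v \<notin> set ws \<Longrightarrow> g v = 0" using g0 ws by simp
  have cmp: "(\<Sum>p\<in>AP S.Est V. (g (fst p) - g (snd p))^2) \<le> (\<Sum>p\<in>AP E V. (g (fst p) - g (snd p))^2)"
  proof (rule layer_compare[where ws=ws and g=g and V=V and ?E1.0="S.Est" and ?E2.0=E, OF ws(2) g0ws wsmono gnn fV])
    have key: "Ncnt S.Est V ws t s \<le> Ncnt E V ws t s" if ts: "1 \<le> t" "t \<le> s" "s \<le> k" for t s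
    proof -
      have XXeq: "XX ws r = XX xs r" if "r \<le> k" for r
        unfolding XX_def using that take_ws by (metis min.absorb1 take_take)
      have XsV: "XX ws s \<subseteq> V" unfolding XX_def using ws IV set_take_subset by fastforce
      have nG: "Ncnt S.Est V ws t s = pc S.Est (XX xs t) (set xs - XX xs s)"
        using Ncnt_pc[OF ts(2) XsV, of S.Est] XXeq ts sxs by simp
      have nT: "Ncnt E V ws t s = pc E (XX ws t) (V - XX ws s)"
        by (rule Ncnt_pc[OF ts(2) XsV])
      have g1: "pc S.Est (XX xs t) (set xs - XX xs s) \<le> Suc (S.cum t) - s"
        by (rule S.G_count[OF ts])
      have t1: "(\<Sum>v\<in>XX ws t. deg E v) \<le> pc E (XX ws t) (V - XX ws s) + (t - 1) + (s - 1)"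
        by (rule T_count[OF tr ws(2)]) (use ws IV ts k_def in auto)
      have "(\<Sum>v\<in>XX ws t. deg E v) = sum_list (take t (map (deg E) ws))"
        unfolding XX_def using ws(2) by (simp add: sum_list_distinct_conv_sum_set take_map)
      moreover have "sum_list (take t D) \<le> sum_list (take t (map (deg E) ws))"
        unfolding D_def by (rule take_sort_le)
      moreover have "sum_list (take t D) = (\<Sum>i<t. D!i)" using ts lenD by (intro sum_take_nth) simp
      moreover have "S.cum t + (t - 1) = (\<Sum>i<t. D!i)" by (rule S.cum_D) (use ts in auto)
      ultimately have "S.cum t + (t - 1) \<le> pc E (XX ws t) (V - XX ws s) + (t - 1) + (s - 1)"
        using t1 by linarith
      then show ?thesis using nG nT g1 ts by linarith
    qed
    fix t s assume "t \<in> {1..length ws}" "s \<in> {1..length ws}"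
    then show "Ncnt S.Est V ws t s \<le> Ncnt E V ws t s"
      using key[of t s] key[of s t] Ncnt_sym[of S.Est V ws t s] Ncnt_sym[of E V ws t s]
      unfolding k_def by (cases "t \<le> s") auto
  qed
  have "lambda_min V S.Est * ipr V E f f \<le> lam * ipr V E f f"
    using gray ipr_eq bfG bfT bff bfl absle cmp by simp
  then have "lambda_min V S.Est \<le> lam" using fpos by simp
  then show ?thesis using twbG dsG sloG unfolding lam_def by blast
qed

end
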